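(* Let $(X,\Sigma,\mu)$ be a complete $\sigma$-finite measure space, $\mathcal{A}\subseteq\Sigma$ a sub-$\sigma$-finite algebra, $E=E^{\mathcal{A}}$ the associated conditional expectation, and $u,w\in\mathcal{D}(E)$ such that $T=M_wEM_u$ is a bounded operator on $L^2(\Sigma)$. Then the spectral radius of $T$ is $r(T)=\|E(uw)\|_\infty$.
   Context: For a sub-$\sigma$-finite algebra $\mathcal{A}\subseteq\Sigma$, $E=E^{\mathcal{A}}$ denotes the conditional expectation: for $f\geq 0$ measurable or $f\in L^2(\Sigma)$, $Ef$ is the unique $\mathcal{A}$-measurable function with $\int_A f\,d\mu=\int_A Ef\,d\mu$ for all $A\in\mathcal{A}$. $\mathcal{D}(E)=\{g\in L^0(\Sigma): E(|g|)\in L^0(\mathcal{A})\}$, where $L^0$ denotes a.e. finite measurable functions. $M_w$ is multiplication by $w$, so $M_wEM_u f=wE(uf)$. $r(T)=\sup\{|\lambda|:\lambda\in\sigma(T)\}$. *)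

theory Defs
  imports "HOL-Probability.Probability"
begin

definition cond_exp_c :: "'a measure \<Rightarrow> 'a measure \<Rightarrow> ('a \<Rightarrow> complex) \<Rightarrow> 'a \<Rightarrow> complex" where
  "cond_exp_c M F f = (\<lambda>x. complex_of_real (real_cond_exp M F (\<lambda>y. Re (f y)) x)
      + \<i> * complex_of_real (real_cond_exp M F (\<lambda>y. Im (f y)) x))"

definition cond_exp_domain :: "'a measure \<Rightarrow> 'a measure \<Rightarrow> ('a \<Rightarrow> complex) \<Rightarrow> bool" where
  "cond_exp_domain M F g \<longleftrightarrow> g \<in> borel_measurable M \<and>
     (AE x in M. nn_cond_exp M F (\<lambda>y. ennreal (cmod (g y))) x \<noteq> \<infinity>)"

definition L2 :: "'a measure \<Rightarrow> ('a \<Rightarrow> complex) set" where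
  "L2 M = {f \<in> borel_measurable M. integrable M (\<lambda>x. (cmod (f x))\<^sup>2)}"

definition L2_norm :: "'a measure \<Rightarrow> ('a \<Rightarrow> complex) \<Rightarrow> real" where
  "L2_norm M f = sqrt (\<integral>x. (cmod (f x))\<^sup>2 \<partial>M)"

definition wce_op :: "'a measure \<Rightarrow> 'a measure \<Rightarrow> ('a \<Rightarrow> complex) \<Rightarrow> ('a \<Rightarrow> complex)
    \<Rightarrow> ('a \<Rightarrow> complex) \<Rightarrow> 'a \<Rightarrow> complex" where
  "wce_op M F w u f = (\<lambda>x. w x * cond_exp_c M F (\<lambda>y. u y * f y) x)"

definition bounded_on_L2 :: "'a measure \<Rightarrow> (('a \<Rightarrow> complex) \<Rightarrow> 'a \<Rightarrow> complex) \<Rightarrow> bool" where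
  "bounded_on_L2 M S \<longleftrightarrow> (\<forall>f\<in>L2 M. S f \<in> L2 M) \<and>
     (\<exists>C. \<forall>f\<in>L2 M. L2_norm M (S f) \<le> C * L2_norm M f)"

text \<open>Spectrum of S on L^2(M) (functions identified a.e.): lambda is in the spectrum iff
  S - lambda I is not bijective on L^2 classes (bounded inverse is automatic for bounded S).\<close>
definition L2_spectrum :: "'a measure \<Rightarrow> (('a \<Rightarrow> complex) \<Rightarrow> 'a \<Rightarrow> complex) \<Rightarrow> complex set" where
  "L2_spectrum M S = {l. \<not> ((\<forall>g\<in>L2 M. \<exists>f\<in>L2 M. AE x in M. S f x - l * f x = g x) \<and>
      (\<forall>f\<in>L2 M. (AE x in M. S f x - l * f x = 0) \<longrightarrow> (AE x in M. f x = 0)))}"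

definition L2_spectral_radius :: "'a measure \<Rightarrow> (('a \<Rightarrow> complex) \<Rightarrow> 'a \<Rightarrow> complex) \<Rightarrow> ereal" where
  "L2_spectral_radius M S = (SUP l\<in>L2_spectrum M S. ereal (cmod l))"

end

theory Submission
  imports Defs
begin

context sigma_finite_subalgebra
begin

lemma nce_const: "AE x in M. nn_cond_exp M F (\<lambda>_. c) x = c"
  using nn_cond_exp_F_meas[of "\<lambda>_. c"] by auto

lemma F_meas_M: "f \<in> borel_measurable F \<Longrightarrow> f \<in> borel_measurable M"
  by (rule measurable_from_subalg[OF subalg])

lemma rce_repr:
  assumes [measurable]: "f \<in> borel_measurable M" "p \<in> borel_measurable M" "q \<in> borel_measurable M"
    and pos: "\<And>x. p x \<ge> 0" "\<And>x. q x \<ge> 0"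
    and eq: "\<And>x. f x = p x - q x"
    and fin: "AE x in M. nn_cond_exp M F (\<lambda>x. ennreal (p x)) x \<noteq> \<infinity>"
             "AE x in M. nn_cond_exp M F (\<lambda>x. ennreal (q x)) x \<noteq> \<infinity>"
  shows "AE x in M. real_cond_exp M F f x =
     enn2real (nn_cond_exp M F (\<lambda>x. ennreal (p x)) x) - enn2real (nn_cond_exp M F (\<lambda>x. ennreal (q x)) x)"
proof -
  let ?N = "nn_cond_exp M F"
  have pt: "\<And>x. ennreal (f x) + ennreal (q x) = ennreal (-f x) + ennreal (p x)"
  proof -
    fix x
    show "ennreal (f x) + ennreal (q x) = ennreal (-f x) + ennreal (p x)"
    proof (cases "f x \<ge> 0")
      case True
      have A: "ennreal (f x + q x) = ennreal (f x) + ennreal (q x)" by (rule ennreal_plus) (use pos True in auto)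
      have B: "f x + q x = p x" using eq[of x] by simp
      have C: "ennreal (-f x) = 0" using True by (simp add: ennreal_neg)
      show ?thesis unfolding C A[symmetric] B by simp
    next
      case False
      have A: "ennreal (-f x + p x) = ennreal (-f x) + ennreal (p x)" by (rule ennreal_plus) (use pos False in auto)
      have B: "-f x + p x = q x" using eq[of x] by simp
      have C: "ennreal (f x) = 0" using False by (simp add: ennreal_neg)
      show ?thesis unfolding C A[symmetric] B by simp
    qed
  qed
  have s1: "AE x in M. ?N (\<lambda>x. ennreal (f x)) x + ?N (\<lambda>x. ennreal (q x)) x = ?N (\<lambda>x. ennreal (f x) + ennreal (q x)) x"
    by (rule nn_cond_exp_sum) auto
  have s2: "AE x in M. ?N (\<lambda>x. ennreal (-f x)) x + ?N (\<lambda>x. ennreal (p x)) x = ?N (\<lambda>x. ennreal (-f x) + ennreal (p x)) x"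
    by (rule nn_cond_exp_sum) auto
  have m1: "AE x in M. ?N (\<lambda>x. ennreal (f x)) x \<le> ?N (\<lambda>x. ennreal (p x)) x"
    by (rule nn_cond_exp_mono) (use eq pos in \<open>auto intro!: ennreal_leI\<close>)
  have m2: "AE x in M. ?N (\<lambda>x. ennreal (-f x)) x \<le> ?N (\<lambda>x. ennreal (q x)) x"
    by (rule nn_cond_exp_mono) (use eq pos in \<open>auto intro!: ennreal_leI\<close>)
  show ?thesis
    using s1 s2 m1 m2 fin
  proof eventually_elim
    case (elim x)
    define a where "a = ?N (\<lambda>x. ennreal (f x)) x"
    define b where "b = ?N (\<lambda>x. ennreal (-f x)) x"
    define P where "P = ?N (\<lambda>x. ennreal (p x)) x"
    define Q where "Q = ?N (\<lambda>x. ennreal (q x)) x"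
    have e: "a + Q = b + P" using elim pt unfolding a_def b_def P_def Q_def by simp
    have fP: "P \<noteq> \<infinity>" "Q \<noteq> \<infinity>" using elim unfolding P_def Q_def by auto
    have fa: "a \<noteq> \<infinity>" "b \<noteq> \<infinity>"
      using fP elim unfolding a_def b_def P_def Q_def by (auto simp: infinity_ennreal_def top_unique)
    have "enn2real (a + Q) = enn2real (b + P)" using e by simp
    then have "enn2real a + enn2real Q = enn2real b + enn2real P"
      using fa fP by (simp add: enn2real_plus less_top)
    then show ?case unfolding real_cond_exp_def a_def b_def P_def Q_def by linarith
  qed
qed

lemma ennreal_max0: "ennreal (max a 0) = ennreal a"
  by (cases "a \<ge> 0") (auto simp: max_def ennreal_neg)

lemma enn2real_ennreal_max: "enn2real (ennreal t) = max t 0"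
  by (cases "t \<ge> 0") (auto simp: ennreal_neg max_def)

lemma ennreal_maxadd: "ennreal (max a 0 + max b 0) = ennreal a + ennreal b"
proof -
  have "ennreal (max a 0 + max b 0) = ennreal (max a 0) + ennreal (max b 0)"
    by (rule ennreal_plus) auto
  then show ?thesis by (simp only: ennreal_max0)
qed

lemma ennreal_maxmult: "ennreal (max a 0 * max b 0) = ennreal a * ennreal b"
proof -
  have "ennreal (max a 0 * max b 0) = ennreal (max a 0) * ennreal (max b 0)"
    by (rule ennreal_mult) auto
  then show ?thesis by (simp only: ennreal_max0)
qed

definition (in -) rgood :: "'a measure \<Rightarrow> 'a measure \<Rightarrow> ('a \<Rightarrow> real) \<Rightarrow> bool" where
  "rgood M F f \<longleftrightarrow> f \<in> borel_measurable M \<and> (AE x in M. nn_cond_exp M F (\<lambda>x. ennreal \<bar>f x\<bar>) x \<noteq> \<infinity>)"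

lemma rgood_fin:
  assumes "rgood M F f"
  shows "AE x in M. nn_cond_exp M F (\<lambda>x. ennreal (f x)) x \<noteq> \<infinity>"
        "AE x in M. nn_cond_exp M F (\<lambda>x. ennreal (- f x)) x \<noteq> \<infinity>"
proof -
  have [measurable]: "f \<in> borel_measurable M" using assms by (simp add: rgood_def)
  have m1: "AE x in M. nn_cond_exp M F (\<lambda>x. ennreal (f x)) x \<le> nn_cond_exp M F (\<lambda>x. ennreal \<bar>f x\<bar>) x"
    by (rule nn_cond_exp_mono) (auto intro!: ennreal_leI)
  have m2: "AE x in M. nn_cond_exp M F (\<lambda>x. ennreal (- f x)) x \<le> nn_cond_exp M F (\<lambda>x. ennreal \<bar>f x\<bar>) x"
    by (rule nn_cond_exp_mono) (auto intro!: ennreal_leI)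
  have a: "AE x in M. nn_cond_exp M F (\<lambda>x. ennreal \<bar>f x\<bar>) x \<noteq> \<infinity>" using assms by (simp add: rgood_def)
  show "AE x in M. nn_cond_exp M F (\<lambda>x. ennreal (f x)) x \<noteq> \<infinity>"
    using m1 a by eventually_elim (auto simp: infinity_ennreal_def top_unique)
  show "AE x in M. nn_cond_exp M F (\<lambda>x. ennreal (- f x)) x \<noteq> \<infinity>"
    using m2 a by eventually_elim (auto simp: infinity_ennreal_def top_unique)
qed

lemma rgood_mono:
  assumes "rgood M F g" "f \<in> borel_measurable M" "AE x in M. \<bar>f x\<bar> \<le> \<bar>g x\<bar>"
  shows "rgood M F f"
proof -
  have [measurable]: "g \<in> borel_measurable M" "f \<in> borel_measurable M" using assms by (auto simp: rgood_def)
  have m: "AE x in M. nn_cond_exp M F (\<lambda>x. ennreal \<bar>f x\<bar>) x \<le> nn_cond_exp M F (\<lambda>x. ennreal \<bar>g x\<bar>) x"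
    by (rule nn_cond_exp_mono) (use assms(3) in \<open>auto intro!: ennreal_leI\<close>)
  have a: "AE x in M. nn_cond_exp M F (\<lambda>x. ennreal \<bar>g x\<bar>) x \<noteq> \<infinity>" using assms by (simp add: rgood_def)
  have "AE x in M. nn_cond_exp M F (\<lambda>x. ennreal \<bar>f x\<bar>) x \<noteq> \<infinity>"
    using m a by eventually_elim (auto simp: infinity_ennreal_def top_unique)
  then show ?thesis unfolding rgood_def by simp
qed

lemma rce_add:
  assumes "rgood M F f" "rgood M F g"
  shows "AE x in M. real_cond_exp M F (\<lambda>x. f x + g x) x = real_cond_exp M F f x + real_cond_exp M F g x"
proof -
  let ?N = "nn_cond_exp M F"
  have [measurable]: "f \<in> borel_measurable M" "g \<in> borel_measurable M" using assms by (auto simp: rgood_def)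
  have s1: "AE x in M. ?N (\<lambda>x. ennreal (f x)) x + ?N (\<lambda>x. ennreal (g x)) x = ?N (\<lambda>x. ennreal (max (f x) 0 + max (g x) 0)) x"
    unfolding ennreal_maxadd by (rule nn_cond_exp_sum) auto
  have s2: "AE x in M. ?N (\<lambda>x. ennreal (-f x)) x + ?N (\<lambda>x. ennreal (-g x)) x = ?N (\<lambda>x. ennreal (max (-f x) 0 + max (-g x) 0)) x"
    unfolding ennreal_maxadd by (rule nn_cond_exp_sum) auto
  note F = rgood_fin[OF assms(1)] rgood_fin[OF assms(2)]
  have r: "AE x in M. real_cond_exp M F (\<lambda>x. f x + g x) x =
     enn2real (?N (\<lambda>x. ennreal (max (f x) 0 + max (g x) 0)) x) - enn2real (?N (\<lambda>x. ennreal (max (-f x) 0 + max (-g x) 0)) x)"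
  proof (rule rce_repr)
    show "AE x in M. ?N (\<lambda>x. ennreal (max (f x) 0 + max (g x) 0)) x \<noteq> \<infinity>"
      using s1 F by eventually_elim (metis ennreal_add_eq_top infinity_ennreal_def)
    show "AE x in M. ?N (\<lambda>x. ennreal (max (-f x) 0 + max (-g x) 0)) x \<noteq> \<infinity>"
      using s2 F by eventually_elim (metis ennreal_add_eq_top infinity_ennreal_def)
  qed auto
  show ?thesis using r s1 s2 F
  proof eventually_elim
    case (elim x)
    define a where "a = ?N (\<lambda>x. ennreal (f x)) x"
    define b where "b = ?N (\<lambda>x. ennreal (g x)) x"
    define c where "c = ?N (\<lambda>x. ennreal (-f x)) x"
    define d where "d = ?N (\<lambda>x. ennreal (-g x)) x"
    have fin: "a \<noteq> \<infinity>" "b \<noteq> \<infinity>" "c \<noteq> \<infinity>" "d \<noteq> \<infinity>" using elim(4-7) unfolding a_def b_def c_def d_def by auto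
    have "real_cond_exp M F (\<lambda>x. f x + g x) x = enn2real (a + b) - enn2real (c + d)"
      using elim(1-3) unfolding a_def b_def c_def d_def by simp
    also have "\<dots> = (enn2real a - enn2real c) + (enn2real b - enn2real d)"
      using fin by (simp add: enn2real_plus less_top[symmetric])
    finally show ?case unfolding real_cond_exp_def a_def b_def c_def d_def .
  qed
qed

lemma rce_mult:
  assumes "rgood M F f" and [measurable]: "k \<in> borel_measurable F"
  shows "AE x in M. real_cond_exp M F (\<lambda>x. k x * f x) x = k x * real_cond_exp M F f x"
proof -
  let ?N = "nn_cond_exp M F"
  have [measurable]: "f \<in> borel_measurable M" using assms by (auto simp: rgood_def)
  have kM[measurable]: "k \<in> borel_measurable M" using F_meas_M[OF assms(2)] .
  have kp[measurable]: "(\<lambda>x. ennreal (max (k x) 0)) \<in> borel_measurable F" "(\<lambda>x. ennreal (max (- k x) 0)) \<in> borel_measurable F"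
    by auto
  have pr1: "AE x in M. ennreal (max (k x) 0) * ?N (\<lambda>x. ennreal (f x)) x = ?N (\<lambda>x. ennreal (max (k x) 0) * ennreal (f x)) x"
    by (rule nn_cond_exp_prod) auto
  have pr2: "AE x in M. ennreal (max (-k x) 0) * ?N (\<lambda>x. ennreal (-f x)) x = ?N (\<lambda>x. ennreal (max (-k x) 0) * ennreal (-f x)) x"
    by (rule nn_cond_exp_prod) auto
  have pr3: "AE x in M. ennreal (max (k x) 0) * ?N (\<lambda>x. ennreal (-f x)) x = ?N (\<lambda>x. ennreal (max (k x) 0) * ennreal (-f x)) x"
    by (rule nn_cond_exp_prod) auto
  have pr4: "AE x in M. ennreal (max (-k x) 0) * ?N (\<lambda>x. ennreal (f x)) x = ?N (\<lambda>x. ennreal (max (-k x) 0) * ennreal (f x)) x"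
    by (rule nn_cond_exp_prod) auto
  define p where "p = (\<lambda>x. max (k x) 0 * max (f x) 0 + max (- k x) 0 * max (- f x) 0)"
  define q where "q = (\<lambda>x. max (k x) 0 * max (- f x) 0 + max (- k x) 0 * max (f x) 0)"
  have ep: "\<And>x. ennreal (p x) = ennreal (max (k x) 0) * ennreal (f x) + ennreal (max (-k x) 0) * ennreal (-f x)"
  proof -
    fix x
    have "ennreal (p x) = ennreal (max (k x) 0 * max (f x) 0) + ennreal (max (- k x) 0 * max (- f x) 0)"
      unfolding p_def by (rule ennreal_plus) auto
    then show "ennreal (p x) = ennreal (max (k x) 0) * ennreal (f x) + ennreal (max (-k x) 0) * ennreal (-f x)"
      by (simp only: ennreal_maxmult ennreal_max0)
  qed
  have eq': "\<And>x. ennreal (q x) = ennreal (max (k x) 0) * ennreal (-f x) + ennreal (max (-k x) 0) * ennreal (f x)"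
  proof -
    fix x
    have "ennreal (q x) = ennreal (max (k x) 0 * max (- f x) 0) + ennreal (max (- k x) 0 * max (f x) 0)"
      unfolding q_def by (rule ennreal_plus) auto
    then show "ennreal (q x) = ennreal (max (k x) 0) * ennreal (-f x) + ennreal (max (-k x) 0) * ennreal (f x)"
      by (simp only: ennreal_maxmult ennreal_max0)
  qed
  have sp: "AE x in M. ?N (\<lambda>x. ennreal (max (k x) 0) * ennreal (f x)) x + ?N (\<lambda>x. ennreal (max (-k x) 0) * ennreal (-f x)) x = ?N (\<lambda>x. ennreal (p x)) x"
    unfolding ep by (rule nn_cond_exp_sum) auto
  have sq: "AE x in M. ?N (\<lambda>x. ennreal (max (k x) 0) * ennreal (-f x)) x + ?N (\<lambda>x. ennreal (max (-k x) 0) * ennreal (f x)) x = ?N (\<lambda>x. ennreal (q x)) x"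
    unfolding eq' by (rule nn_cond_exp_sum) auto
  note F = rgood_fin[OF assms(1)]
  have r: "AE x in M. real_cond_exp M F (\<lambda>x. k x * f x) x = enn2real (?N (\<lambda>x. ennreal (p x)) x) - enn2real (?N (\<lambda>x. ennreal (q x)) x)"
  proof (rule rce_repr)
    show "AE x in M. ?N (\<lambda>x. ennreal (p x)) x \<noteq> \<infinity>"
      using sp pr1 pr2 F by eventually_elim (auto simp: ennreal_mult_eq_top_iff)
    show "AE x in M. ?N (\<lambda>x. ennreal (q x)) x \<noteq> \<infinity>"
      using sq pr3 pr4 F by eventually_elim (auto simp: ennreal_mult_eq_top_iff)
    show "\<And>x. k x * f x = p x - q x" unfolding p_def q_def by (auto simp: max_def algebra_simps)
  qed (auto simp: p_def q_def)
  show ?thesis using r sp sq pr1 pr2 pr3 pr4 F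
  proof eventually_elim
    case (elim x)
    define A where "A = ?N (\<lambda>x. ennreal (f x)) x"
    define B where "B = ?N (\<lambda>x. ennreal (- f x)) x"
    have fA: "A \<noteq> \<infinity>" "B \<noteq> \<infinity>" using elim unfolding A_def B_def by auto
    have "?N (\<lambda>x. ennreal (p x)) x = ennreal (max (k x) 0) * A + ennreal (max (-k x) 0) * B"
      using elim unfolding A_def B_def by simp
    then have P: "enn2real (?N (\<lambda>x. ennreal (p x)) x) = max (k x) 0 * enn2real A + max (-k x) 0 * enn2real B"
      using fA by (simp add: enn2real_plus enn2real_mult ennreal_mult_eq_top_iff less_top[symmetric] enn2real_ennreal_max)
    have "?N (\<lambda>x. ennreal (q x)) x = ennreal (max (k x) 0) * B + ennreal (max (-k x) 0) * A"
      using elim unfolding A_def B_def by simp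
    then have Q: "enn2real (?N (\<lambda>x. ennreal (q x)) x) = max (k x) 0 * enn2real B + max (-k x) 0 * enn2real A"
      using fA by (simp add: enn2real_plus enn2real_mult ennreal_mult_eq_top_iff less_top[symmetric] enn2real_ennreal_max)
    have "real_cond_exp M F f x = enn2real A - enn2real B" unfolding real_cond_exp_def A_def B_def by simp
    then have R: "real_cond_exp M F f x = enn2real A - enn2real B" .
    have "real_cond_exp M F (\<lambda>x. k x * f x) x = (max (k x) 0 * enn2real A + max (-k x) 0 * enn2real B) - (max (k x) 0 * enn2real B + max (-k x) 0 * enn2real A)"
      by (subst elim(1)) (simp only: P Q)
    also have "\<dots> = (max (k x) 0 - max (-k x) 0) * (enn2real A - enn2real B)" by algebra
    also have "max (k x) 0 - max (-k x) 0 = k x" by (auto simp: max_def)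
    finally show ?case unfolding R .
  qed
qed

lemma ennreal_le_add:
  assumes "a \<le> b + c" "b \<ge> 0" "c \<ge> 0"
  shows "ennreal a \<le> ennreal b + ennreal c"
proof -
  have e: "ennreal (b + c) = ennreal b + ennreal c" by (rule ennreal_plus) (use assms in auto)
  have "ennreal a \<le> ennreal (b + c)" using assms(1) by (rule ennreal_leI)
  then show ?thesis unfolding e .
qed

lemma nn_fin_mono:
  assumes [measurable]: "f \<in> borel_measurable M" "g \<in> borel_measurable M"
    and "AE x in M. f x \<le> g x" "AE x in M. nn_cond_exp M F g x \<noteq> \<infinity>"
  shows "AE x in M. nn_cond_exp M F f x \<noteq> \<infinity>"
proof -
  have "AE x in M. nn_cond_exp M F f x \<le> nn_cond_exp M F g x"
    by (rule nn_cond_exp_mono) (use assms in auto)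
  then show ?thesis using assms(4) by eventually_elim (auto simp: infinity_ennreal_def top_unique)
qed

lemma nn_fin_add:
  assumes [measurable]: "f \<in> borel_measurable M" "g \<in> borel_measurable M"
    and "AE x in M. nn_cond_exp M F f x \<noteq> \<infinity>" "AE x in M. nn_cond_exp M F g x \<noteq> \<infinity>"
  shows "AE x in M. nn_cond_exp M F (\<lambda>x. f x + g x) x \<noteq> \<infinity>"
proof -
  have "AE x in M. nn_cond_exp M F f x + nn_cond_exp M F g x = nn_cond_exp M F (\<lambda>x. f x + g x) x"
    by (rule nn_cond_exp_sum) auto
  then show ?thesis using assms(3,4) by eventually_elim (auto simp: infinity_ennreal_def)
qed

lemma nn_fin_prod:
  assumes [measurable]: "k \<in> borel_measurable F" "g \<in> borel_measurable M"
    and "AE x in M. nn_cond_exp M F g x \<noteq> \<infinity>" "\<And>x. k x \<noteq> \<infinity>"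
  shows "AE x in M. nn_cond_exp M F (\<lambda>x. k x * g x) x \<noteq> \<infinity>"
proof -
  have "AE x in M. k x * nn_cond_exp M F g x = nn_cond_exp M F (\<lambda>x. k x * g x) x"
    by (rule nn_cond_exp_prod) auto
  then show ?thesis using assms(3) by eventually_elim (use assms(4) in \<open>auto simp: ennreal_mult_eq_top_iff\<close>)
qed

lemma rgood_add:
  assumes "rgood M F f" "rgood M F g"
  shows "rgood M F (\<lambda>x. f x + g x)"
proof -
  have [measurable]: "f \<in> borel_measurable M" "g \<in> borel_measurable M" using assms by (auto simp: rgood_def)
  have "AE x in M. nn_cond_exp M F (\<lambda>x. ennreal \<bar>f x\<bar> + ennreal \<bar>g x\<bar>) x \<noteq> \<infinity>"
    by (rule nn_fin_add) (use assms in \<open>auto simp: rgood_def\<close>)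
  then have "AE x in M. nn_cond_exp M F (\<lambda>x. ennreal \<bar>f x + g x\<bar>) x \<noteq> \<infinity>"
    by (rule nn_fin_mono[rotated 3]) (auto intro!: ennreal_le_add)
  then show ?thesis by (simp add: rgood_def)
qed

lemma rgood_mult:
  assumes "rgood M F f" and [measurable]: "k \<in> borel_measurable F"
  shows "rgood M F (\<lambda>x. k x * f x)"
proof -
  have [measurable]: "f \<in> borel_measurable M" using assms by (auto simp: rgood_def)
  have kM[measurable]: "k \<in> borel_measurable M" using F_meas_M[OF assms(2)] .
  have "AE x in M. nn_cond_exp M F (\<lambda>x. ennreal \<bar>k x\<bar> * ennreal \<bar>f x\<bar>) x \<noteq> \<infinity>"
    by (rule nn_fin_prod) (use assms in \<open>auto simp: rgood_def\<close>)
  moreover have "\<And>x. ennreal \<bar>k x\<bar> * ennreal \<bar>f x\<bar> = ennreal \<bar>k x * f x\<bar>"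
    by (simp add: abs_mult ennreal_mult)
  ultimately show ?thesis by (simp add: rgood_def)
qed

lemma cd_re_im:
  assumes "cond_exp_domain M F g"
  shows "rgood M F (\<lambda>x. Re (g x))" "rgood M F (\<lambda>x. Im (g x))"
proof -
  have [measurable]: "g \<in> borel_measurable M" using assms by (simp add: cond_exp_domain_def)
  have a: "AE x in M. nn_cond_exp M F (\<lambda>x. ennreal (cmod (g x))) x \<noteq> \<infinity>" using assms by (simp add: cond_exp_domain_def)
  have "AE x in M. nn_cond_exp M F (\<lambda>x. ennreal \<bar>Re (g x)\<bar>) x \<noteq> \<infinity>"
    by (rule nn_fin_mono[OF _ _ _ a]) (auto intro!: ennreal_leI abs_Re_le_cmod)
  then show "rgood M F (\<lambda>x. Re (g x))" unfolding rgood_def by auto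
  have "AE x in M. nn_cond_exp M F (\<lambda>x. ennreal \<bar>Im (g x)\<bar>) x \<noteq> \<infinity>"
    by (rule nn_fin_mono[OF _ _ _ a]) (auto intro!: ennreal_leI abs_Im_le_cmod)
  then show "rgood M F (\<lambda>x. Im (g x))" unfolding rgood_def by auto
qed

lemma cd_mono:
  assumes "cond_exp_domain M F g" "f \<in> borel_measurable M" "AE x in M. cmod (f x) \<le> cmod (g x)"
  shows "cond_exp_domain M F f"
proof -
  have [measurable]: "g \<in> borel_measurable M" "f \<in> borel_measurable M" using assms by (auto simp: cond_exp_domain_def)
  have a: "AE x in M. nn_cond_exp M F (\<lambda>x. ennreal (cmod (g x))) x \<noteq> \<infinity>" using assms by (simp add: cond_exp_domain_def)
  have "AE x in M. nn_cond_exp M F (\<lambda>x. ennreal (cmod (f x))) x \<noteq> \<infinity>"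
    by (rule nn_fin_mono[OF _ _ _ a]) (use assms(3) in \<open>auto intro!: ennreal_leI elim!: eventually_mono\<close>)
  then show ?thesis unfolding cond_exp_domain_def by auto
qed

lemma cd_add:
  assumes "cond_exp_domain M F f" "cond_exp_domain M F g"
  shows "cond_exp_domain M F (\<lambda>x. f x + g x)"
    "AE x in M. cond_exp_c M F (\<lambda>x. f x + g x) x = cond_exp_c M F f x + cond_exp_c M F g x"
proof -
  have [measurable]: "g \<in> borel_measurable M" "f \<in> borel_measurable M" using assms by (auto simp: cond_exp_domain_def)
  have "AE x in M. nn_cond_exp M F (\<lambda>x. ennreal (cmod (f x)) + ennreal (cmod (g x))) x \<noteq> \<infinity>"
    by (rule nn_fin_add) (use assms in \<open>auto simp: cond_exp_domain_def\<close>)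
  then have "AE x in M. nn_cond_exp M F (\<lambda>x. ennreal (cmod (f x + g x))) x \<noteq> \<infinity>"
    by (rule nn_fin_mono[rotated 3]) (auto intro!: ennreal_le_add norm_triangle_ineq)
  then show "cond_exp_domain M F (\<lambda>x. f x + g x)" by (simp add: cond_exp_domain_def)
  have r: "AE x in M. real_cond_exp M F (\<lambda>x. Re (f x) + Re (g x)) x = real_cond_exp M F (\<lambda>x. Re (f x)) x + real_cond_exp M F (\<lambda>x. Re (g x)) x"
    by (rule rce_add) (use cd_re_im assms in auto)
  have i: "AE x in M. real_cond_exp M F (\<lambda>x. Im (f x) + Im (g x)) x = real_cond_exp M F (\<lambda>x. Im (f x)) x + real_cond_exp M F (\<lambda>x. Im (g x)) x"
    by (rule rce_add) (use cd_re_im assms in auto)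
  show "AE x in M. cond_exp_c M F (\<lambda>x. f x + g x) x = cond_exp_c M F f x + cond_exp_c M F g x"
    using r i by eventually_elim (simp add: cond_exp_c_def algebra_simps)
qed

lemma cd_mult:
  assumes "cond_exp_domain M F g" and [measurable]: "k \<in> borel_measurable F"
  shows "cond_exp_domain M F (\<lambda>x. k x * g x)"
    "AE x in M. cond_exp_c M F (\<lambda>x. k x * g x) x = k x * cond_exp_c M F g x"
proof -
  have [measurable]: "g \<in> borel_measurable M" using assms by (auto simp: cond_exp_domain_def)
  have kM[measurable]: "k \<in> borel_measurable M" using F_meas_M[OF assms(2)] .
  have "AE x in M. nn_cond_exp M F (\<lambda>x. ennreal (cmod (k x)) * ennreal (cmod (g x))) x \<noteq> \<infinity>"
    by (rule nn_fin_prod) (use assms in \<open>auto simp: cond_exp_domain_def\<close>)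
  moreover have "\<And>x. ennreal (cmod (k x)) * ennreal (cmod (g x)) = ennreal (cmod (k x * g x))"
    by (simp add: norm_mult ennreal_mult)
  ultimately show "cond_exp_domain M F (\<lambda>x. k x * g x)" by (simp add: cond_exp_domain_def)
  note G = cd_re_im[OF assms(1)]
  have [measurable]: "(\<lambda>x. Re (k x)) \<in> borel_measurable F" "(\<lambda>x. Im (k x)) \<in> borel_measurable F"
    "(\<lambda>x. - Im (k x)) \<in> borel_measurable F" by auto
  have r1: "AE x in M. real_cond_exp M F (\<lambda>x. Re (k x) * Re (g x) + (- Im (k x)) * Im (g x)) x =
      real_cond_exp M F (\<lambda>x. Re (k x) * Re (g x)) x + real_cond_exp M F (\<lambda>x. (- Im (k x)) * Im (g x)) x"
    by (rule rce_add; rule rgood_mult[OF G(1)] rgood_mult[OF G(2)]; simp)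
  have r2: "AE x in M. real_cond_exp M F (\<lambda>x. Re (k x) * Im (g x) + Im (k x) * Re (g x)) x =
      real_cond_exp M F (\<lambda>x. Re (k x) * Im (g x)) x + real_cond_exp M F (\<lambda>x. Im (k x) * Re (g x)) x"
    by (rule rce_add; rule rgood_mult[OF G(1)] rgood_mult[OF G(2)]; simp)
  have m1: "AE x in M. real_cond_exp M F (\<lambda>x. Re (k x) * Re (g x)) x = Re (k x) * real_cond_exp M F (\<lambda>x. Re (g x)) x"
    by (rule rce_mult) (auto intro!: G)
  have m2: "AE x in M. real_cond_exp M F (\<lambda>x. (- Im (k x)) * Im (g x)) x = (- Im (k x)) * real_cond_exp M F (\<lambda>x. Im (g x)) x"
    by (rule rce_mult) (auto intro!: G)
  have m3: "AE x in M. real_cond_exp M F (\<lambda>x. Re (k x) * Im (g x)) x = Re (k x) * real_cond_exp M F (\<lambda>x. Im (g x)) x"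
    by (rule rce_mult) (auto intro!: G)
  have m4: "AE x in M. real_cond_exp M F (\<lambda>x. Im (k x) * Re (g x)) x = Im (k x) * real_cond_exp M F (\<lambda>x. Re (g x)) x"
    by (rule rce_mult) (auto intro!: G)
  have e1: "(\<lambda>x. Re (k x * g x)) = (\<lambda>x. Re (k x) * Re (g x) + (- Im (k x)) * Im (g x))" by auto
  have e2: "(\<lambda>x. Im (k x * g x)) = (\<lambda>x. Re (k x) * Im (g x) + Im (k x) * Re (g x))" by auto
  show "AE x in M. cond_exp_c M F (\<lambda>x. k x * g x) x = k x * cond_exp_c M F g x"
    using r1 r2 m1 m2 m3 m4
  proof eventually_elim
    case (elim x)
    show ?case unfolding cond_exp_c_def e1 e2 elim
      by (simp add: complex_eq_iff algebra_simps)
  qed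
qed

end

context sigma_finite_subalgebra
begin

lemma nn_cond_exp_zero_imp:
  assumes [measurable]: "g \<in> borel_measurable M"
  shows "AE x in M. nn_cond_exp M F g x = 0 \<longrightarrow> g x = 0"
proof -
  define A where "A = {x \<in> space M. nn_cond_exp M F g x = 0}"
  have sp: "space F = space M" using subalg by (simp add: subalgebra_def)
  have "{x \<in> space F. nn_cond_exp M F g x = 0} \<in> sets F" by measurable
  then have AF[measurable]: "A \<in> sets F" unfolding A_def sp .
  have AM[measurable]: "A \<in> sets M" using AF subalg by (auto simp: subalgebra_def)
  have "(\<integral>\<^sup>+ x. indicator A x * g x \<partial>M) = (\<integral>\<^sup>+ x. indicator A x * nn_cond_exp M F g x \<partial>M)"
    by (rule nn_cond_exp_intg[symmetric]) auto
  also have "\<dots> = 0" by (rule nn_integral_0_iff_AE[THEN iffD2]) (auto simp: A_def indicator_def)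
  finally have "AE x in M. indicator A x * g x = 0" by (subst (asm) nn_integral_0_iff_AE) auto
  then show ?thesis using AE_space by eventually_elim (auto simp: A_def indicator_def)
qed

lemma rce_nonneg:
  assumes [measurable]: "h \<in> borel_measurable M" and "\<And>x. h x \<ge> 0"
  shows "AE x in M. real_cond_exp M F h x = enn2real (nn_cond_exp M F (\<lambda>x. ennreal (h x)) x)"
proof -
  have "(\<lambda>x. ennreal (- h x)) = (\<lambda>x. 0)" using assms(2) by (auto simp: ennreal_neg)
  then show ?thesis using nce_const[of 0] unfolding real_cond_exp_def by auto
qed

lemma rce_zero: "AE x in M. real_cond_exp M F (\<lambda>x. 0) x = 0"
  using rce_nonneg[of "\<lambda>x. 0"] nce_const[of 0] by auto

lemma rce_cong:
  assumes [measurable]: "f \<in> borel_measurable M" "g \<in> borel_measurable M" and "AE x in M. f x = g x"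
  shows "AE x in M. real_cond_exp M F f x = real_cond_exp M F g x"
proof -
  have "AE x in M. nn_cond_exp M F (\<lambda>x. ennreal (f x)) x = nn_cond_exp M F (\<lambda>x. ennreal (g x)) x"
    by (rule nn_cond_exp_cong) (use assms(3) in auto)
  moreover have "AE x in M. nn_cond_exp M F (\<lambda>x. ennreal (- f x)) x = nn_cond_exp M F (\<lambda>x. ennreal (- g x)) x"
    by (rule nn_cond_exp_cong) (use assms(3) in auto)
  ultimately show ?thesis unfolding real_cond_exp_def by eventually_elim auto
qed

lemma ce_cong:
  assumes [measurable]: "f \<in> borel_measurable M" "g \<in> borel_measurable M" and "AE x in M. f x = g x"
  shows "AE x in M. cond_exp_c M F f x = cond_exp_c M F g x"
proof -
  have "AE x in M. real_cond_exp M F (\<lambda>x. Re (f x)) x = real_cond_exp M F (\<lambda>x. Re (g x)) x"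
    by (rule rce_cong) (use assms(3) in auto)
  moreover have "AE x in M. real_cond_exp M F (\<lambda>x. Im (f x)) x = real_cond_exp M F (\<lambda>x. Im (g x)) x"
    by (rule rce_cong) (use assms(3) in auto)
  ultimately show ?thesis unfolding cond_exp_c_def by eventually_elim auto
qed

lemma ce_zero: "AE x in M. cond_exp_c M F (\<lambda>x. 0) x = 0"
  using rce_zero unfolding cond_exp_c_def by eventually_elim auto

lemma ce_of_real_nonneg:
  assumes [measurable]: "h \<in> borel_measurable M" and "\<And>x. h x \<ge> 0"
  shows "AE x in M. cond_exp_c M F (\<lambda>x. complex_of_real (h x)) x = complex_of_real (enn2real (nn_cond_exp M F (\<lambda>x. ennreal (h x)) x))"
  using rce_nonneg[OF assms] rce_zero unfolding cond_exp_c_def by eventually_elim auto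

lemma rce_indicator:
  assumes [measurable]: "h \<in> borel_measurable M" "A \<in> sets F"
  shows "AE x in M. real_cond_exp M F (\<lambda>x. indicator A x * h x) x = indicator A x * real_cond_exp M F h x"
proof -
  have e1: "(\<lambda>x. ennreal (indicator A x * h x)) = (\<lambda>x. indicator A x * ennreal (h x))"
    by (auto simp: indicator_def)
  have e2: "(\<lambda>x. ennreal (- (indicator A x * h x))) = (\<lambda>x. indicator A x * ennreal (- h x))"
    by (auto simp: indicator_def)
  have p1: "AE x in M. indicator A x * nn_cond_exp M F (\<lambda>x. ennreal (h x)) x = nn_cond_exp M F (\<lambda>x. indicator A x * ennreal (h x)) x"
    by (rule nn_cond_exp_prod) auto
  have p2: "AE x in M. indicator A x * nn_cond_exp M F (\<lambda>x. ennreal (- h x)) x = nn_cond_exp M F (\<lambda>x. indicator A x * ennreal (- h x)) x"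
    by (rule nn_cond_exp_prod) auto
  show ?thesis using p1 p2 unfolding real_cond_exp_def e1 e2
    by eventually_elim (auto simp: indicator_def)
qed

lemma ce_indicator:
  assumes [measurable]: "g \<in> borel_measurable M" "A \<in> sets F"
  shows "AE x in M. cond_exp_c M F (\<lambda>x. indicator A x * g x) x = indicator A x * cond_exp_c M F g x"
proof -
  have r: "AE x in M. real_cond_exp M F (\<lambda>x. indicator A x * Re (g x)) x = indicator A x * real_cond_exp M F (\<lambda>x. Re (g x)) x"
    by (rule rce_indicator) auto
  have i: "AE x in M. real_cond_exp M F (\<lambda>x. indicator A x * Im (g x)) x = indicator A x * real_cond_exp M F (\<lambda>x. Im (g x)) x"
    by (rule rce_indicator) auto
  have e1: "(\<lambda>x. Re (indicator A x * g x)) = (\<lambda>x. indicator A x * Re (g x))" by (auto simp: indicator_def)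
  have e2: "(\<lambda>x. Im (indicator A x * g x)) = (\<lambda>x. indicator A x * Im (g x))" by (auto simp: indicator_def)
  show ?thesis using r i unfolding cond_exp_c_def e1 e2
    by eventually_elim (auto simp: indicator_def)
qed

lemma nn_cond_exp_SUP:
  assumes [measurable]: "\<And>n. f n \<in> borel_measurable M" and inc: "\<And>x. incseq (\<lambda>n. f n x)"
  shows "AE x in M. nn_cond_exp M F (\<lambda>x. SUP n. f n x) x = (SUP n. nn_cond_exp M F (f n) x)"
proof -
  have "AE x in M. (SUP n. nn_cond_exp M F (f n) x) = nn_cond_exp M F (\<lambda>x. SUP n. f n x) x"
  proof (rule nn_cond_exp_charact)
    fix A assume AF[measurable]: "A \<in> sets F"
    have AM[measurable]: "A \<in> sets M" using AF subalg by (auto simp: subalgebra_def)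
    have "(\<integral>\<^sup>+ x \<in> A. (SUP n. f n x) \<partial>M) = (\<integral>\<^sup>+ x. (SUP n. indicator A x * f n x) \<partial>M)"
      by (auto intro!: nn_integral_cong simp: SUP_mult_left_ennreal mult.commute)
    also have "\<dots> = (SUP n. \<integral>\<^sup>+ x. indicator A x * f n x \<partial>M)"
      by (rule nn_integral_monotone_convergence_SUP)
        (use inc in \<open>auto simp: incseq_def le_fun_def intro!: mult_left_mono\<close>)
    also have "\<dots> = (SUP n. \<integral>\<^sup>+ x. indicator A x * nn_cond_exp M F (f n) x \<partial>M)"
      by (auto intro!: SUP_cong nn_cond_exp_intg[symmetric])
    also have "\<dots> = (\<integral>\<^sup>+ x. (SUP n. indicator A x * nn_cond_exp M F (f n) x) \<partial>M)"
    proof (rule nn_integral_monotone_convergence_SUP_AE[symmetric])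
      fix n
      have "AE x in M. nn_cond_exp M F (f n) x \<le> nn_cond_exp M F (f (Suc n)) x"
        by (rule nn_cond_exp_mono) (use inc in \<open>auto simp: incseq_Suc_iff\<close>)
      then show "AE x in M. indicator A x * nn_cond_exp M F (f n) x \<le> indicator A x * nn_cond_exp M F (f (Suc n)) x"
        by eventually_elim (auto intro!: mult_left_mono)
    qed auto
    also have "\<dots> = (\<integral>\<^sup>+ x \<in> A. (SUP n. nn_cond_exp M F (f n) x) \<partial>M)"
      by (auto intro!: nn_integral_cong simp: SUP_mult_left_ennreal mult.commute)
    finally show "(\<integral>\<^sup>+ x \<in> A. (SUP n. f n x) \<partial>M) = (\<integral>\<^sup>+ x \<in> A. (SUP n. nn_cond_exp M F (f n) x) \<partial>M)" .
  qed auto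
  then show ?thesis by eventually_elim simp
qed

end

locale wce_setting = sigma_finite_subalgebra +
  fixes u w :: "'a \<Rightarrow> complex" and C :: real
  assumes du: "cond_exp_domain M F u" and dw: "cond_exp_domain M F w"
    and maps: "\<And>f. f \<in> L2 M \<Longrightarrow> wce_op M F w u f \<in> L2 M"
    and bound: "\<And>f. f \<in> L2 M \<Longrightarrow> L2_norm M (wce_op M F w u f) \<le> C * L2_norm M f"
    and Cpos: "C \<ge> 0"
begin

abbreviation "T \<equiv> wce_op M F w u"
definition "W = nn_cond_exp M F (\<lambda>x. ennreal ((cmod (w x))\<^sup>2))"

lemma u_meas[measurable]: "u \<in> borel_measurable M" and w_meas[measurable]: "w \<in> borel_measurable M"
  using du dw by (auto simp: cond_exp_domain_def)

lemma W_meas[measurable]: "W \<in> borel_measurable F" "W \<in> borel_measurable M"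
  unfolding W_def by auto

lemma L2_integrable: "f \<in> L2 M \<Longrightarrow> integrable M (\<lambda>x. (cmod (f x))\<^sup>2)"
  by (simp add: L2_def)

lemma L2_meas: "f \<in> L2 M \<Longrightarrow> f \<in> borel_measurable M"
  by (simp add: L2_def)

lemma L2_sq: "f \<in> L2 M \<Longrightarrow> (L2_norm M f)\<^sup>2 = (\<integral>x. (cmod (f x))\<^sup>2 \<partial>M)"
  unfolding L2_norm_def by (simp add: integral_nonneg_AE)

lemma T_sq_bound:
  assumes "f \<in> L2 M"
  shows "(\<integral>x. (cmod (T f x))\<^sup>2 \<partial>M) \<le> C\<^sup>2 * (\<integral>x. (cmod (f x))\<^sup>2 \<partial>M)"
proof -
  have "(L2_norm M (T f))\<^sup>2 \<le> (C * L2_norm M f)\<^sup>2"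
    by (rule power_mono[OF bound[OF assms]]) (simp add: L2_norm_def)
  then show ?thesis using L2_sq[OF assms] L2_sq[OF maps[OF assms]] by (simp add: power_mult_distrib)
qed

lemma nn_L2:
  assumes "f \<in> L2 M"
  shows "(\<integral>\<^sup>+x. ennreal ((cmod (f x))\<^sup>2) \<partial>M) = ennreal (\<integral>x. (cmod (f x))\<^sup>2 \<partial>M)"
  by (rule nn_integral_eq_integral) (use L2_integrable[OF assms] in auto)

lemma test_bound:
  fixes a :: "'a \<Rightarrow> real"
  assumes [measurable]: "a \<in> borel_measurable M" and apos: "\<And>x. a x \<ge> 0"
    and aint: "integrable M (\<lambda>x. (a x)\<^sup>2)"
    and fin: "AE x in M. nn_cond_exp M F (\<lambda>x. ennreal (cmod (u x) * a x)) x \<noteq> \<infinity>"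
  shows "(\<integral>\<^sup>+ x. W x * ennreal ((enn2real (nn_cond_exp M F (\<lambda>x. ennreal (cmod (u x) * a x)) x))\<^sup>2) \<partial>M)
           \<le> ennreal (C\<^sup>2) * (\<integral>\<^sup>+ x. ennreal ((a x)\<^sup>2) \<partial>M)"
proof -
  define V where "V = nn_cond_exp M F (\<lambda>x. ennreal (cmod (u x) * a x))"
  have [measurable]: "V \<in> borel_measurable F" unfolding V_def by auto
  define f where "f = (\<lambda>x. cnj (u x) / complex_of_real (cmod (u x)) * complex_of_real (a x))"
  have [measurable]: "(\<lambda>x. cnj (u x)) \<in> borel_measurable M"
    by (rule borel_measurable_continuous_on[of cnj]) (auto intro: continuous_intros)
  have [measurable]: "f \<in> borel_measurable M" unfolding f_def by measurable
  have uf: "\<And>x. u x * f x = complex_of_real (cmod (u x) * a x)"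
  proof -
    fix x show "u x * f x = complex_of_real (cmod (u x) * a x)"
    proof (cases "u x = 0")
      case False
      have "u x * cnj (u x) = complex_of_real ((cmod (u x))\<^sup>2)" by (rule complex_norm_square[symmetric])
      then show ?thesis using False unfolding f_def
        by (simp add: field_simps power2_eq_square)
    qed (simp add: f_def)
  qed
  have cf: "\<And>x. cmod (f x) \<le> a x"
    unfolding f_def using apos by (auto simp: norm_mult norm_divide)
  have fL2: "f \<in> L2 M" unfolding L2_def
  proof (intro CollectI conjI)
    show "integrable M (\<lambda>x. (cmod (f x))\<^sup>2)"
      by (rule Bochner_Integration.integrable_bound[OF aint]) (auto intro!: power_mono cf)
  qed auto
  have Tf: "AE x in M. T f x = w x * complex_of_real (enn2real (V x))"
  proof -
    have "AE x in M. cond_exp_c M F (\<lambda>x. complex_of_real (cmod (u x) * a x)) x = complex_of_real (enn2real (V x))"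
      unfolding V_def by (rule ce_of_real_nonneg) (auto intro: apos mult_nonneg_nonneg)
    then show ?thesis unfolding wce_op_def uf by eventually_elim simp
  qed
  have "(\<integral>\<^sup>+ x. W x * ennreal ((enn2real (V x))\<^sup>2) \<partial>M) = (\<integral>\<^sup>+ x. ennreal ((enn2real (V x))\<^sup>2) * W x \<partial>M)"
    by (simp add: mult.commute)
  also have "\<dots> = (\<integral>\<^sup>+ x. ennreal ((enn2real (V x))\<^sup>2) * ennreal ((cmod (w x))\<^sup>2) \<partial>M)"
    unfolding W_def by (rule nn_cond_exp_intg) auto
  also have "\<dots> = (\<integral>\<^sup>+ x. ennreal ((cmod (T f x))\<^sup>2) \<partial>M)"
    by (rule nn_integral_cong_AE) (use Tf in \<open>eventually_elim, auto simp: norm_mult ennreal_mult[symmetric] power_mult_distrib\<close>)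
  also have "\<dots> = ennreal (\<integral>x. (cmod (T f x))\<^sup>2 \<partial>M)" by (rule nn_L2[OF maps[OF fL2]])
  also have "\<dots> \<le> ennreal (C\<^sup>2 * (\<integral>x. (cmod (f x))\<^sup>2 \<partial>M))"
    by (rule ennreal_leI) (rule T_sq_bound[OF fL2])
  also have "\<dots> \<le> ennreal (C\<^sup>2 * (\<integral>x. (a x)\<^sup>2 \<partial>M))"
    by (intro ennreal_leI mult_left_mono integral_mono aint)
       (auto intro!: power_mono cf simp: L2_integrable[OF fL2])
  also have "\<dots> = ennreal (C\<^sup>2) * (\<integral>\<^sup>+ x. ennreal ((a x)\<^sup>2) \<partial>M)"
    by (subst nn_integral_eq_integral) (auto simp: aint ennreal_mult integral_nonneg_AE)
  finally show ?thesis unfolding V_def .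
qed

lemma (in -) pw_blowup:
  fixes W :: ennreal and V :: "nat \<Rightarrow> ennreal"
  assumes "W > 0" "\<And>n. V n \<noteq> \<infinity>" "(SUP n. V n) = \<infinity>"
  shows "(SUP n. W * ennreal ((enn2real (V n))\<^sup>2)) = \<infinity>"
proof -
  let ?S = "SUP n. W * ennreal ((enn2real (V n))\<^sup>2)"
  have ge: "W * ennreal (R\<^sup>2) \<le> ?S" if R: "R \<ge> 0" for R :: real
  proof -
    have "ennreal R < (SUP n. V n)" unfolding assms(3) by simp
    then obtain n where n: "ennreal R < V n" by (auto simp: less_SUP_iff)
    have "R < enn2real (V n)" using n assms(2)[of n] R
      by (metis enn2real_ennreal ennreal_enn2real_if ennreal_less_iff infinity_ennreal_def less_le_trans not_less order_refl top.not_eq_extremum)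
    then have "R\<^sup>2 \<le> (enn2real (V n))\<^sup>2" using R by (intro power_mono) auto
    then have "W * ennreal (R\<^sup>2) \<le> W * ennreal ((enn2real (V n))\<^sup>2)"
      by (intro mult_left_mono ennreal_leI) auto
    also have "\<dots> \<le> ?S" by (rule SUP_upper) auto
    finally show ?thesis .
  qed
  show ?thesis
  proof (cases "W = \<infinity>")
    case True
    then show ?thesis using ge[of 1] by (simp add: top_unique)
  next
    case False
    then obtain w0 where w0: "W = ennreal w0" "w0 > 0" using assms(1)
      by (cases W) (auto simp: ennreal_less_zero_iff)
    have "ennreal (real m) \<le> ?S" for m :: nat
    proof -
      have "ennreal (real m) = W * ennreal ((sqrt (real m / w0))\<^sup>2)"
        using w0 by (simp add: ennreal_mult[symmetric])
      also have "\<dots> \<le> ?S" by (rule ge) (use w0 in auto)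
      finally show ?thesis .
    qed
    note mm = this
    show ?thesis
    proof (rule ccontr)
      assume "?S \<noteq> \<infinity>"
      then obtain s where s: "?S = ennreal s" "s \<ge> 0" by (cases ?S) auto
      obtain m :: nat where m: "s < real m" using reals_Archimedean2 by blast
      have "ennreal (real m) \<le> ennreal s" using mm[of m] s by simp
      then show False using m s by (simp add: ennreal_le_iff)
    qed
  qed
qed

lemma test_bound2:
  fixes a :: "'a \<Rightarrow> real"
  assumes [measurable]: "a \<in> borel_measurable M" and apos: "\<And>x. a x \<ge> 0"
    and aint: "integrable M (\<lambda>x. (a x)\<^sup>2)"
  shows "AE x in M. 0 < W x \<longrightarrow> nn_cond_exp M F (\<lambda>x. ennreal (cmod (u x) * a x)) x \<noteq> \<infinity>"
proof -
  define an where "an = (\<lambda>n x. if cmod (u x) * a x \<le> real n then a x else 0)"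
  have an_meas[measurable]: "\<And>n. an n \<in> borel_measurable M" unfolding an_def by measurable
  define h where "h = (\<lambda>n x. ennreal (cmod (u x) * an n x))"
  have h_meas[measurable]: "\<And>n. h n \<in> borel_measurable M" unfolding h_def by measurable
  have h_inc: "\<And>x. incseq (\<lambda>n. h n x)"
    unfolding h_def an_def incseq_def using apos
    by (auto intro!: ennreal_leI simp: order_trans[OF _ of_nat_mono])
  have h_sup: "\<And>x. (SUP n. h n x) = ennreal (cmod (u x) * a x)"
  proof -
    fix x
    obtain N :: nat where N: "cmod (u x) * a x \<le> real N" using real_arch_simple by blast
    have "\<And>n. h n x \<le> ennreal (cmod (u x) * a x)" unfolding h_def an_def using apos[of x]
      by (auto intro!: ennreal_leI)
    moreover have "h N x = ennreal (cmod (u x) * a x)" unfolding h_def an_def using N by simp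
    ultimately show "(SUP n. h n x) = ennreal (cmod (u x) * a x)"
      by (intro antisym SUP_least) (auto intro: SUP_upper2[of N])
  qed
  define V where "V = (\<lambda>n. nn_cond_exp M F (h n))"
  have V_meas[measurable]: "\<And>n. V n \<in> borel_measurable F" "\<And>n. V n \<in> borel_measurable M" unfolding V_def by auto
  have V_fin: "AE x in M. \<forall>n. V n x \<noteq> \<infinity>"
  proof (rule AE_all_countable[THEN iffD2], rule allI)
    fix n
    have le: "AE x in M. V n x \<le> nn_cond_exp M F (\<lambda>x. ennreal (real n)) x"
      unfolding V_def by (rule nn_cond_exp_mono) (auto simp: h_def an_def intro!: ennreal_leI)
    show "AE x in M. V n x \<noteq> \<infinity>" using le nce_const[of "ennreal (real n)"]
      by eventually_elim (auto simp: top_unique infinity_ennreal_def)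
  qed
  have V_inc: "AE x in M. \<forall>n. V n x \<le> V (Suc n) x"
  proof (rule AE_all_countable[THEN iffD2], rule allI)
    fix n show "AE x in M. V n x \<le> V (Suc n) x"
      unfolding V_def by (rule nn_cond_exp_mono) (use h_inc in \<open>auto simp: incseq_Suc_iff\<close>)
  qed
  have V_sup: "AE x in M. nn_cond_exp M F (\<lambda>x. ennreal (cmod (u x) * a x)) x = (SUP n. V n x)"
    using nn_cond_exp_SUP[OF h_meas h_inc] unfolding V_def h_sup .
  define G where "G = (\<lambda>n x. W x * ennreal ((enn2real (V n x))\<^sup>2))"
  have G_meas[measurable]: "\<And>n. G n \<in> borel_measurable M" unfolding G_def by measurable
  have G_bnd: "\<And>n. (\<integral>\<^sup>+ x. G n x \<partial>M) \<le> ennreal (C\<^sup>2) * (\<integral>\<^sup>+ x. ennreal ((a x)\<^sup>2) \<partial>M)"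
  proof -
    fix n
    have "(\<integral>\<^sup>+ x. G n x \<partial>M) \<le> ennreal (C\<^sup>2) * (\<integral>\<^sup>+ x. ennreal ((an n x)\<^sup>2) \<partial>M)"
      unfolding G_def V_def h_def
    proof (rule test_bound)
      show "integrable M (\<lambda>x. (an n x)\<^sup>2)"
        by (rule Bochner_Integration.integrable_bound[OF aint]) (auto simp: an_def)
      show "AE x in M. nn_cond_exp M F (\<lambda>x. ennreal (cmod (u x) * an n x)) x \<noteq> \<infinity>"
        using V_fin unfolding V_def h_def by auto
    qed (auto simp: an_def apos)
    also have "\<dots> \<le> ennreal (C\<^sup>2) * (\<integral>\<^sup>+ x. ennreal ((a x)\<^sup>2) \<partial>M)"
      by (intro mult_left_mono nn_integral_mono ennreal_leI) (auto simp: an_def)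
    finally show "(\<integral>\<^sup>+ x. G n x \<partial>M) \<le> ennreal (C\<^sup>2) * (\<integral>\<^sup>+ x. ennreal ((a x)\<^sup>2) \<partial>M)" .
  qed
  have "(\<integral>\<^sup>+ x. (SUP n. G n x) \<partial>M) = (SUP n. \<integral>\<^sup>+ x. G n x \<partial>M)"
  proof (rule nn_integral_monotone_convergence_SUP_AE)
    fix n show "AE x in M. G n x \<le> G (Suc n) x"
      using V_inc V_fin unfolding G_def
      by eventually_elim (auto intro!: mult_left_mono ennreal_leI power_mono enn2real_mono simp: less_top)
  qed auto
  also have "\<dots> \<le> ennreal (C\<^sup>2) * (\<integral>\<^sup>+ x. ennreal ((a x)\<^sup>2) \<partial>M)" by (rule SUP_least) (rule G_bnd)
  also have "\<dots> < \<infinity>" using aint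
    by (simp add: nn_integral_eq_integral ennreal_mult_less_top)
  finally have "AE x in M. (SUP n. G n x) \<noteq> \<infinity>"
    by (intro nn_integral_PInf_AE) (auto simp: G_def)
  then show ?thesis using V_fin V_sup
  proof eventually_elim
    case (elim x)
    show ?case
    proof
      assume "0 < W x"
      show "nn_cond_exp M F (\<lambda>x. ennreal (cmod (u x) * a x)) x \<noteq> \<infinity>"
      proof
        assume inf: "nn_cond_exp M F (\<lambda>x. ennreal (cmod (u x) * a x)) x = \<infinity>"
        have "(SUP n. G n x) = \<infinity>" unfolding G_def
          by (rule pw_blowup) (use elim inf \<open>0 < W x\<close> in auto)
        then show False using elim by simp
      qed
    qed
  qed
qed

lemma rho_exists:
  obtains \<rho> :: "'a \<Rightarrow> real" where "\<rho> \<in> borel_measurable F" "\<And>x. \<rho> x > 0" "\<And>x. \<rho> x \<le> 1" "integrable M \<rho>"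
proof -
  obtain \<rho> :: "'a \<Rightarrow> real" where r: "\<rho> \<in> borel_measurable (restr_to_subalg M F)" "\<And>x. \<rho> x > 0" "\<And>x. \<rho> x \<le> 1"
    "integrable (restr_to_subalg M F) \<rho>"
    using sigma_finite_measure.obtain_positive_integrable_function[OF sigma_fin_subalg] by metis
  show ?thesis
    using that[of \<rho>] r measurable_in_subalg'[OF subalg r(1)] integrable_from_subalg[OF subalg r(4)] by auto
qed

lemma W_zero: "AE x in M. W x = 0 \<longrightarrow> w x = 0"
proof -
  have "AE x in M. nn_cond_exp M F (\<lambda>x. ennreal ((cmod (w x))\<^sup>2)) x = 0 \<longrightarrow> ennreal ((cmod (w x))\<^sup>2) = 0"
    by (rule nn_cond_exp_zero_imp) simp
  then show ?thesis unfolding W_def by eventually_elim auto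
qed

lemma (in sigma_finite_subalgebra) nn_vanish:
  assumes [measurable]: "g \<in> borel_measurable M" "A \<in> sets F" and "AE x in M. x \<in> A \<longrightarrow> g x = 0"
  shows "AE x in M. x \<in> A \<longrightarrow> nn_cond_exp M F g x = 0"
proof -
  have [measurable]: "A \<in> sets M" using assms(2) subalg by (auto simp: subalgebra_def)
  have p: "AE x in M. indicator A x * nn_cond_exp M F g x = nn_cond_exp M F (\<lambda>x. indicator A x * g x) x"
    by (rule nn_cond_exp_prod) auto
  have c: "AE x in M. nn_cond_exp M F (\<lambda>x. indicator A x * g x) x = nn_cond_exp M F (\<lambda>x. 0) x"
    by (rule nn_cond_exp_cong) (use assms(3) in \<open>auto simp: indicator_def\<close>)
  show ?thesis using p c nce_const[of 0] by eventually_elim (auto simp: indicator_def)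
qed

lemma sets_F_M: "A \<in> sets F \<Longrightarrow> A \<in> sets M"
  using subalg by (auto simp: subalgebra_def)

lemma space_F: "space F = space M"
  using subalg by (auto simp: subalgebra_def)

lemma setF: assumes [measurable]: "f \<in> borel_measurable F" and "Measurable.pred borel P"
  shows "{x \<in> space M. P (f x)} \<in> sets F"
proof -
  have "{x \<in> space F. P (f x)} \<in> sets F" using assms by measurable
  then show ?thesis by (simp add: space_F)
qed

lemma W_inf: "AE x in M. W x = \<infinity> \<longrightarrow> u x = 0"
proof -
  obtain \<rho> :: "'a \<Rightarrow> real" where r[measurable]: "\<rho> \<in> borel_measurable F" and rp: "\<And>x. \<rho> x > 0" "\<And>x. \<rho> x \<le> 1"
    and ri: "integrable M \<rho>" using rho_exists by metis
  have rM[measurable]: "\<rho> \<in> borel_measurable M" using F_meas_M[OF r] .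
  have r2: "integrable M (\<lambda>x. (\<rho> x)\<^sup>2)"
    by (rule Bochner_Integration.integrable_bound[OF ri])
       (use rp in \<open>auto simp: power2_eq_square abs_of_pos intro!: mult_left_le_one_le less_imp_le\<close>)
  let ?V = "nn_cond_exp M F (\<lambda>x. ennreal (cmod (u x) * \<rho> x))"
  have e: "(\<lambda>x. ennreal (cmod (u x) * \<rho> x)) = (\<lambda>x. ennreal (\<rho> x) * ennreal (cmod (u x)))"
    by (intro ext, subst mult.commute, rule ennreal_mult) (use rp in \<open>auto intro: less_imp_le\<close>)
  have fin: "AE x in M. ?V x \<noteq> \<infinity>"
    unfolding e by (rule nn_fin_prod) (use du in \<open>auto simp: cond_exp_domain_def\<close>)
  have "(\<integral>\<^sup>+ x. W x * ennreal ((enn2real (?V x))\<^sup>2) \<partial>M) \<le> ennreal (C\<^sup>2) * (\<integral>\<^sup>+ x. ennreal ((\<rho> x)\<^sup>2) \<partial>M)"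
    by (rule test_bound) (use rp r2 fin in \<open>auto intro: less_imp_le\<close>)
  also have "\<dots> < \<infinity>" using r2 by (simp add: nn_integral_eq_integral ennreal_mult_less_top)
  finally have "AE x in M. W x * ennreal ((enn2real (?V x))\<^sup>2) \<noteq> \<infinity>"
    by (intro nn_integral_PInf_AE) auto
  moreover have "AE x in M. ?V x = 0 \<longrightarrow> ennreal (cmod (u x) * \<rho> x) = 0"
    by (rule nn_cond_exp_zero_imp) simp
  ultimately show ?thesis using fin
  proof eventually_elim
    case (elim x)
    show ?case
    proof
      assume Wi: "W x = \<infinity>"
      have "enn2real (?V x) = 0"
        using elim(1) Wi by (auto simp: ennreal_mult_eq_top_iff)
      then have "?V x = 0" using elim(3) by (auto simp: enn2real_eq_0_iff)
      then have "ennreal (cmod (u x) * \<rho> x) = 0" using elim(2) by auto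
      then have "cmod (u x) * \<rho> x \<le> 0" by (simp add: ennreal_eq_0_iff)
      then have "cmod (u x) \<le> 0" using rp[of x] by (simp add: mult_le_0_iff)
      then show "u x = 0" by simp
    qed
  qed
qed

lemma C1:
  assumes "g \<in> L2 M"
  shows "AE x in M. 0 < W x \<longrightarrow> nn_cond_exp M F (\<lambda>x. ennreal (cmod (u x * g x))) x \<noteq> \<infinity>"
proof -
  have [measurable]: "g \<in> borel_measurable M" using L2_meas[OF assms] .
  show ?thesis
    using test_bound2[of "\<lambda>x. cmod (g x)"] L2_integrable[OF assms] by (simp add: norm_mult)
qed

lemma C2: "cond_exp_domain M F (\<lambda>x. u x * w x)"
proof -
  obtain \<rho> :: "'a \<Rightarrow> real" where r[measurable]: "\<rho> \<in> borel_measurable F" and rp: "\<And>x. \<rho> x > 0" "\<And>x. \<rho> x \<le> 1"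
    and ri: "integrable M \<rho>" using rho_exists by metis
  have rM[measurable]: "\<rho> \<in> borel_measurable M" using F_meas_M[OF r] .
  define c where "c = (\<lambda>x. if W x = \<infinity> then 0 else sqrt (\<rho> x / (1 + enn2real (W x))))"
  have c_meas[measurable]: "c \<in> borel_measurable F" unfolding c_def by measurable
  have cM[measurable]: "c \<in> borel_measurable M" using F_meas_M[OF c_meas] .
  have cpos2: "\<And>x. W x \<noteq> \<infinity> \<Longrightarrow> c x > 0"
  proof -
    fix x assume "W x \<noteq> \<infinity>"
    have "0 < 1 + enn2real (W x)" by (simp add: add_pos_nonneg)
    then have "0 < \<rho> x / (1 + enn2real (W x))" using rp[of x] by simp
    then show "c x > 0" unfolding c_def using \<open>W x \<noteq> \<infinity>\<close> by simp
  qed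
  have cpos: "\<And>x. c x \<ge> 0"
    by (metis c_def cpos2 less_imp_le order_refl)
  define a where "a = (\<lambda>x. cmod (w x) * c x)"
  have [measurable]: "a \<in> borel_measurable M" unfolding a_def by measurable
  have Wc: "\<And>x. ennreal ((c x)\<^sup>2) * W x \<le> ennreal (\<rho> x)"
  proof -
    fix x
    show "ennreal ((c x)\<^sup>2) * W x \<le> ennreal (\<rho> x)"
    proof (cases "W x = \<infinity>")
      case False
      then obtain t where t: "W x = ennreal t" "t \<ge> 0" by (cases "W x") auto
      have "(c x)\<^sup>2 = \<rho> x / (1 + t)" unfolding c_def using False rp[of x] t by (auto intro!: divide_nonneg_nonneg less_imp_le)
      then have "ennreal ((c x)\<^sup>2) * W x = ennreal (\<rho> x / (1 + t) * t)"
        using t rp[of x] by (simp add: ennreal_mult[symmetric] less_imp_le)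
      also have "\<dots> \<le> ennreal (\<rho> x)"
      proof (rule ennreal_leI)
        have "\<rho> x / (1 + t) * t = \<rho> x * (t / (1 + t))" by simp
        also have "\<dots> \<le> \<rho> x * 1" using t rp[of x] by (intro mult_left_mono) (auto intro: less_imp_le)
        finally show "\<rho> x / (1 + t) * t \<le> \<rho> x" by simp
      qed
      finally show ?thesis .
    qed (simp add: c_def)
  qed
  have "(\<integral>\<^sup>+ x. ennreal ((a x)\<^sup>2) \<partial>M) = (\<integral>\<^sup>+ x. ennreal ((c x)\<^sup>2) * ennreal ((cmod (w x))\<^sup>2) \<partial>M)"
    unfolding a_def by (auto intro!: nn_integral_cong simp: power_mult_distrib ennreal_mult[symmetric] mult.commute)
  also have "\<dots> = (\<integral>\<^sup>+ x. ennreal ((c x)\<^sup>2) * W x \<partial>M)"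
    unfolding W_def by (rule nn_cond_exp_intg[symmetric]) auto
  also have "\<dots> \<le> (\<integral>\<^sup>+ x. ennreal (\<rho> x) \<partial>M)" by (rule nn_integral_mono) (rule Wc)
  also have "\<dots> < \<infinity>" using ri rp by (simp add: nn_integral_eq_integral less_imp_le)
  finally have aint: "integrable M (\<lambda>x. (a x)\<^sup>2)"
    by (intro integrableI_nn_integral_finite[where x="enn2real (\<integral>\<^sup>+ x. ennreal ((a x)\<^sup>2) \<partial>M)"])
       (auto simp: less_top)
  have tb: "AE x in M. 0 < W x \<longrightarrow> nn_cond_exp M F (\<lambda>x. ennreal (cmod (u x) * a x)) x \<noteq> \<infinity>"
    by (rule test_bound2) (use aint cpos in \<open>auto simp: a_def\<close>)
  have e: "(\<lambda>x. ennreal (cmod (u x) * a x)) = (\<lambda>x. ennreal (c x) * ennreal (cmod (u x * w x)))"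
    unfolding a_def using cpos by (auto simp: ennreal_mult[symmetric] norm_mult mult.commute mult.left_commute intro!: ext)
  have pr: "AE x in M. ennreal (c x) * nn_cond_exp M F (\<lambda>x. ennreal (cmod (u x * w x))) x
      = nn_cond_exp M F (\<lambda>x. ennreal (c x) * ennreal (cmod (u x * w x))) x"
    by (rule nn_cond_exp_prod) auto
  have ZF: "{x \<in> space M. W x = 0} \<in> sets F" by (rule setF[OF W_meas(1)]) measurable
  have IF: "{x \<in> space M. W x = \<infinity>} \<in> sets F" by (rule setF[OF W_meas(1)]) measurable
  have Z: "AE x in M. x \<in> {x \<in> space M. W x = 0} \<longrightarrow> nn_cond_exp M F (\<lambda>x. ennreal (cmod (u x * w x))) x = 0"
    by (rule nn_vanish) (use W_zero ZF in \<open>auto elim!: eventually_mono\<close>)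
  have I: "AE x in M. x \<in> {x \<in> space M. W x = \<infinity>} \<longrightarrow> nn_cond_exp M F (\<lambda>x. ennreal (cmod (u x * w x))) x = 0"
    by (rule nn_vanish) (use W_inf IF in \<open>auto elim!: eventually_mono\<close>)
  have "AE x in M. nn_cond_exp M F (\<lambda>x. ennreal (cmod (u x * w x))) x \<noteq> \<infinity>"
    using tb pr Z I AE_space
  proof eventually_elim
    case (elim x)
    show ?case
    proof (cases "W x = 0 \<or> W x = \<infinity>")
      case True then show ?thesis using elim by auto
    next
      case False
      then have "0 < W x" "W x \<noteq> \<infinity>" by (auto simp: zero_less_iff_neq_zero)
      then show ?thesis using elim e cpos2[of x] by (auto simp: ennreal_mult_eq_top_iff)
    qed
  qed
  then show ?thesis unfolding cond_exp_domain_def by auto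
qed

end

lemma ce_meas[measurable]: "cond_exp_c M F f \<in> borel_measurable F"
  unfolding cond_exp_c_def by measurable

context wce_setting
begin

lemma ce_measM[measurable]: "cond_exp_c M F f \<in> borel_measurable M"
  using F_meas_M[OF ce_meas] .

definition "P = {x \<in> space M. 0 < W x}"
definition "uP = (\<lambda>x. indicator P x * u x)"
definition "\<phi> = cond_exp_c M F (\<lambda>x. u x * w x)"

lemma P_F[measurable]: "P \<in> sets F" unfolding P_def by (rule setF[OF W_meas(1)]) measurable
lemma P_M[measurable]: "P \<in> sets M" using sets_F_M[OF P_F] .
lemma uP_meas[measurable]: "uP \<in> borel_measurable M" unfolding uP_def by measurable
lemma phi_meas[measurable]: "\<phi> \<in> borel_measurable F" "\<phi> \<in> borel_measurable M" unfolding \<phi>_def by auto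

lemma T_meas[measurable]: "T f \<in> borel_measurable M"
  unfolding wce_op_def by measurable

lemma T_repr:
  assumes [measurable]: "g \<in> borel_measurable M"
  shows "AE x in M. T g x = w x * cond_exp_c M F (\<lambda>x. uP x * g x) x"
proof -
  have e: "(\<lambda>x. uP x * g x) = (\<lambda>x. indicator P x * (u x * g x))" unfolding uP_def by (auto simp: mult.assoc)
  have "AE x in M. cond_exp_c M F (\<lambda>x. indicator P x * (u x * g x)) x = indicator P x * cond_exp_c M F (\<lambda>x. u x * g x) x"
    by (rule ce_indicator) auto
  then show ?thesis using W_zero AE_space unfolding e wce_op_def
    by eventually_elim (auto simp: P_def indicator_def)
qed

lemma dom_uPg:
  assumes "g \<in> L2 M"
  shows "cond_exp_domain M F (\<lambda>x. uP x * g x)"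
proof -
  have [measurable]: "g \<in> borel_measurable M" using L2_meas[OF assms] .
  have e: "(\<lambda>x. ennreal (cmod (uP x * g x))) = (\<lambda>x. indicator P x * ennreal (cmod (u x * g x)))"
    unfolding uP_def by (auto simp: indicator_def norm_mult)
  have pr: "AE x in M. indicator P x * nn_cond_exp M F (\<lambda>x. ennreal (cmod (u x * g x))) x
      = nn_cond_exp M F (\<lambda>x. indicator P x * ennreal (cmod (u x * g x))) x"
    by (rule nn_cond_exp_prod) auto
  have "AE x in M. nn_cond_exp M F (\<lambda>x. ennreal (cmod (uP x * g x))) x \<noteq> \<infinity>"
  proof -
    have c: "AE x in M. x \<in> P \<longrightarrow> nn_cond_exp M F (\<lambda>x. ennreal (cmod (u x * g x))) x \<noteq> \<infinity>"
      using C1[OF assms] by eventually_elim (auto simp: P_def)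
    show ?thesis unfolding e using pr c
    proof eventually_elim
      case (elim x) then show ?case by (cases "x \<in> P") auto
    qed
  qed
  then show ?thesis unfolding cond_exp_domain_def by auto
qed

lemma T_add:
  assumes "f \<in> L2 M" "g \<in> L2 M"
  shows "AE x in M. T (\<lambda>x. f x + g x) x = T f x + T g x"
proof -
  have [measurable]: "f \<in> borel_measurable M" "g \<in> borel_measurable M" using L2_meas assms by auto
  have e: "(\<lambda>x. uP x * (f x + g x)) = (\<lambda>x. uP x * f x + uP x * g x)" by (auto simp: algebra_simps)
  have a: "AE x in M. cond_exp_c M F (\<lambda>x. uP x * f x + uP x * g x) x =
      cond_exp_c M F (\<lambda>x. uP x * f x) x + cond_exp_c M F (\<lambda>x. uP x * g x) x"
    by (rule cd_add(2)) (use dom_uPg assms in auto)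
  have r: "AE x in M. T (\<lambda>x. f x + g x) x = w x * cond_exp_c M F (\<lambda>x. uP x * (f x + g x)) x"
    by (rule T_repr) auto
  show ?thesis using r T_repr[OF \<open>f \<in> borel_measurable M\<close>] T_repr[OF \<open>g \<in> borel_measurable M\<close>] a unfolding e
    by eventually_elim (auto simp: algebra_simps)
qed

lemma T_cmult:
  assumes "f \<in> L2 M"
  shows "AE x in M. T (\<lambda>x. c * f x) x = c * T f x"
proof -
  have [measurable]: "f \<in> borel_measurable M" using L2_meas assms by auto
  have e: "(\<lambda>x. uP x * (c * f x)) = (\<lambda>x. c * (uP x * f x))" by (auto simp: algebra_simps)
  have a: "AE x in M. cond_exp_c M F (\<lambda>x. c * (uP x * f x)) x = c * cond_exp_c M F (\<lambda>x. uP x * f x) x"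
    by (rule cd_mult(2)) (use dom_uPg assms in auto)
  have r: "AE x in M. T (\<lambda>x. c * f x) x = w x * cond_exp_c M F (\<lambda>x. uP x * (c * f x)) x"
    by (rule T_repr) auto
  show ?thesis using r T_repr[OF \<open>f \<in> borel_measurable M\<close>] a unfolding e
    by eventually_elim (auto simp: algebra_simps)
qed

lemma T_pull:
  assumes [measurable]: "k \<in> borel_measurable F"
  shows "AE x in M. T (\<lambda>x. w x * k x) x = w x * k x * \<phi> x"
proof -
  have e: "(\<lambda>x. u x * (w x * k x)) = (\<lambda>x. k x * (u x * w x))" by (auto simp: algebra_simps)
  have a: "AE x in M. cond_exp_c M F (\<lambda>x. k x * (u x * w x)) x = k x * \<phi> x"
    unfolding \<phi>_def by (rule cd_mult(2)) (use C2 in auto)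
  show ?thesis using a unfolding wce_op_def e by eventually_elim (auto simp: algebra_simps)
qed

lemma T_cong:
  assumes [measurable]: "f \<in> borel_measurable M" "g \<in> borel_measurable M" and "AE x in M. f x = g x"
  shows "AE x in M. T f x = T g x"
proof -
  have "AE x in M. cond_exp_c M F (\<lambda>x. u x * f x) x = cond_exp_c M F (\<lambda>x. u x * g x) x"
    by (rule ce_cong) (use assms(3) in auto)
  then show ?thesis unfolding wce_op_def by eventually_elim auto
qed

lemma phi_vanish: "AE x in M. \<phi> x \<noteq> 0 \<longrightarrow> 0 < W x \<and> W x \<noteq> \<infinity>"
proof -
  have ZF[measurable]: "{x \<in> space M. W x = 0} \<in> sets F" by (rule setF[OF W_meas(1)]) measurable
  have IF[measurable]: "{x \<in> space M. W x = \<infinity>} \<in> sets F" by (rule setF[OF W_meas(1)]) measurable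
  have v: "AE x in M. x \<in> A \<longrightarrow> \<phi> x = 0" if AF[measurable]: "A \<in> sets F" and z: "AE x in M. x \<in> A \<longrightarrow> u x * w x = 0" for A
  proof -
    have [measurable]: "A \<in> sets M" using sets_F_M[OF AF] .
    have i: "AE x in M. cond_exp_c M F (\<lambda>x. indicator A x * (u x * w x)) x = indicator A x * \<phi> x"
      unfolding \<phi>_def by (rule ce_indicator) auto
    have c: "AE x in M. cond_exp_c M F (\<lambda>x. indicator A x * (u x * w x)) x = cond_exp_c M F (\<lambda>x. 0) x"
      by (rule ce_cong) (use z in \<open>auto simp: indicator_def\<close>)
    show ?thesis using i c ce_zero by eventually_elim (auto simp: indicator_def)
  qed
  have a: "AE x in M. x \<in> {x \<in> space M. W x = 0} \<longrightarrow> \<phi> x = 0"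
    by (rule v[OF ZF]) (use W_zero in \<open>auto elim!: eventually_mono\<close>)
  have b: "AE x in M. x \<in> {x \<in> space M. W x = \<infinity>} \<longrightarrow> \<phi> x = 0"
    by (rule v[OF IF]) (use W_inf in \<open>auto elim!: eventually_mono\<close>)
  show ?thesis using a b AE_space by eventually_elim (auto simp: zero_less_iff_neq_zero)
qed

lemma WK:
  assumes [measurable]: "k \<in> borel_measurable F"
  shows "(\<integral>\<^sup>+ x. ennreal ((cmod (w x * k x))\<^sup>2) \<partial>M) = (\<integral>\<^sup>+ x. ennreal ((cmod (k x))\<^sup>2) * W x \<partial>M)"
proof -
  have "(\<integral>\<^sup>+ x. ennreal ((cmod (w x * k x))\<^sup>2) \<partial>M) = (\<integral>\<^sup>+ x. ennreal ((cmod (k x))\<^sup>2) * ennreal ((cmod (w x))\<^sup>2) \<partial>M)"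
    by (auto intro!: nn_integral_cong simp: norm_mult power_mult_distrib ennreal_mult[symmetric] mult.commute)
  also have "\<dots> = (\<integral>\<^sup>+ x. ennreal ((cmod (k x))\<^sup>2) * W x \<partial>M)"
    unfolding W_def by (rule nn_cond_exp_intg[symmetric]) auto
  finally show ?thesis .
qed

end

context wce_setting
begin

definition "\<rho> = (SOME \<rho> :: 'a \<Rightarrow> real. \<rho> \<in> borel_measurable F \<and> (\<forall>x. \<rho> x > 0) \<and> (\<forall>x. \<rho> x \<le> 1) \<and> integrable M \<rho>)"

lemma rho_props: "\<rho> \<in> borel_measurable F" "\<And>x. \<rho> x > 0" "\<And>x. \<rho> x \<le> 1" "integrable M \<rho>"
proof -
  obtain r :: "'a \<Rightarrow> real" where "r \<in> borel_measurable F" "\<And>x. r x > 0" "\<And>x. r x \<le> 1" "integrable M r"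
    using rho_exists by metis
  then have "\<exists>\<rho> :: 'a \<Rightarrow> real. \<rho> \<in> borel_measurable F \<and> (\<forall>x. \<rho> x > 0) \<and> (\<forall>x. \<rho> x \<le> 1) \<and> integrable M \<rho>" by (intro exI[of _ r]) auto
  from someI_ex[OF this] show "\<rho> \<in> borel_measurable F" "\<And>x. \<rho> x > 0" "\<And>x. \<rho> x \<le> 1" "integrable M \<rho>"
    unfolding \<rho>_def by auto
qed

lemma rho_meas[measurable]: "\<rho> \<in> borel_measurable F" "\<rho> \<in> borel_measurable M"
  using rho_props(1) F_meas_M[OF rho_props(1)] by auto

lemma rho_fin: "(\<integral>\<^sup>+ x. ennreal (\<rho> x) \<partial>M) < \<infinity>"
  using rho_props by (subst nn_integral_eq_integral) (auto intro: less_imp_le)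


definition "cW = (\<lambda>x. if W x = \<infinity> then 0 else sqrt (\<rho> x / (1 + enn2real (W x))))"

lemma cW_meas[measurable]: "cW \<in> borel_measurable F" "cW \<in> borel_measurable M"
proof -
  show "cW \<in> borel_measurable F" unfolding cW_def by measurable
  then show "cW \<in> borel_measurable M" by (rule F_meas_M)
qed

lemma cW_pos2: "W x \<noteq> \<infinity> \<Longrightarrow> cW x > 0"
proof -
  assume "W x \<noteq> \<infinity>"
  have "0 < 1 + enn2real (W x)" by (simp add: add_pos_nonneg)
  then have "0 < \<rho> x / (1 + enn2real (W x))" using rho_props(2)[of x] by simp
  then show "cW x > 0" unfolding cW_def using \<open>W x \<noteq> \<infinity>\<close> by simp
qed

lemma cW_pos: "cW x \<ge> 0"
proof (cases "W x = \<infinity>")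
  case True then show ?thesis by (simp add: cW_def)
next
  case False then show ?thesis using cW_pos2[of x] by simp
qed

lemma cW_W: "ennreal ((cW x)\<^sup>2) * W x \<le> ennreal (\<rho> x)"
proof (cases "W x = \<infinity>")
  case False
  then obtain t where t: "W x = ennreal t" "t \<ge> 0" by (cases "W x") auto
  have rp: "\<rho> x > 0" "\<rho> x \<le> 1" using rho_props by auto
  have "(cW x)\<^sup>2 = \<rho> x / (1 + t)" unfolding cW_def using False rp t by (auto intro!: divide_nonneg_nonneg less_imp_le)
  then have "ennreal ((cW x)\<^sup>2) * W x = ennreal (\<rho> x / (1 + t) * t)"
    using t rp by (simp add: ennreal_mult[symmetric] less_imp_le)
  also have "\<dots> \<le> ennreal (\<rho> x)"
  proof (rule ennreal_leI)
    have "\<rho> x / (1 + t) * t = \<rho> x * (t / (1 + t))" by simp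
    also have "\<dots> \<le> \<rho> x * 1" using t rp by (intro mult_left_mono) (auto intro: less_imp_le)
    finally show "\<rho> x / (1 + t) * t \<le> \<rho> x" by simp
  qed
  finally show ?thesis .
qed (simp add: cW_def)


lemma L2_of_nn:
  assumes [measurable]: "g \<in> borel_measurable M" and "(\<integral>\<^sup>+ x. ennreal ((cmod (g x))\<^sup>2) \<partial>M) < \<infinity>"
  shows "g \<in> L2 M"
  unfolding L2_def using assms
  by (auto intro!: integrableI_nn_integral_finite[where x="enn2real (\<integral>\<^sup>+ x. ennreal ((cmod (g x))\<^sup>2) \<partial>M)"] simp: less_top)

lemma nn_of_L2: "g \<in> L2 M \<Longrightarrow> (\<integral>\<^sup>+ x. ennreal ((cmod (g x))\<^sup>2) \<partial>M) < \<infinity>"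
  using nn_L2 by simp

lemma L2_mono:
  assumes "f \<in> L2 M" "g \<in> borel_measurable M" "AE x in M. cmod (g x) \<le> cmod (f x)"
  shows "g \<in> L2 M"
  unfolding L2_def using assms(2,3) L2_integrable[OF assms(1)]
  by (auto intro!: Bochner_Integration.integrable_bound[where f="\<lambda>x. (cmod (f x))\<^sup>2"] power_mono elim!: eventually_mono)

lemma L2_add:
  assumes "f \<in> L2 M" "g \<in> L2 M"
  shows "(\<lambda>x. f x + g x) \<in> L2 M"
proof -
  have [measurable]: "f \<in> borel_measurable M" "g \<in> borel_measurable M" using assms L2_meas by auto
  have i: "integrable M (\<lambda>x. 2 * (cmod (f x))\<^sup>2 + 2 * (cmod (g x))\<^sup>2)"
    using L2_integrable[OF assms(1)] L2_integrable[OF assms(2)] by auto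
  have b: "(cmod (f x + g x))\<^sup>2 \<le> 2 * (cmod (f x))\<^sup>2 + 2 * (cmod (g x))\<^sup>2" for x
  proof -
    have "(cmod (f x + g x))\<^sup>2 \<le> (cmod (f x) + cmod (g x))\<^sup>2"
      by (rule power_mono[OF norm_triangle_ineq]) auto
    moreover have "0 \<le> (cmod (f x) - cmod (g x))\<^sup>2" by simp
    ultimately show ?thesis unfolding power2_sum power2_diff by linarith
  qed
  have b2: "norm ((cmod (f x + g x))\<^sup>2) \<le> norm (2 * (cmod (f x))\<^sup>2 + 2 * (cmod (g x))\<^sup>2)" for x
  proof -
    have "0 \<le> 2 * (cmod (f x))\<^sup>2 + 2 * (cmod (g x))\<^sup>2" by simp
    then show ?thesis using b[of x] by (simp only: real_norm_def abs_of_nonneg zero_le_power2)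
  qed
  show ?thesis unfolding L2_def
    by (auto intro!: Bochner_Integration.integrable_bound[OF i] b2)
qed

lemma L2_cmult:
  assumes "f \<in> L2 M"
  shows "(\<lambda>x. c * f x) \<in> L2 M"
proof -
  have [measurable]: "f \<in> borel_measurable M" using assms L2_meas by auto
  have "integrable M (\<lambda>x. (cmod c)\<^sup>2 * (cmod (f x))\<^sup>2)" using L2_integrable[OF assms] by auto
  then show ?thesis unfolding L2_def by (simp add: norm_mult power_mult_distrib)
qed

end

context wce_setting
begin

lemma resolvent:
  assumes l0: "l \<noteq> 0" and d0: "\<delta> > 0" and dl: "AE x in M. \<delta> \<le> cmod (\<phi> x - l)"
  shows "l \<notin> L2_spectrum M T"
proof -
  have surj: "\<exists>f\<in>L2 M. AE x in M. T f x - l * f x = g x" if gL2: "g \<in> L2 M" for g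
  proof -
    have [measurable]: "g \<in> borel_measurable M" using L2_meas[OF gL2] .
    define k where "k = (\<lambda>x. cond_exp_c M F (\<lambda>x. uP x * g x) x / (\<phi> x - l))"
    have k_meas[measurable]: "k \<in> borel_measurable F" unfolding k_def by measurable
    have kM[measurable]: "k \<in> borel_measurable M" using F_meas_M[OF k_meas] .
    have Tg: "AE x in M. T g x = w x * cond_exp_c M F (\<lambda>x. uP x * g x) x" by (rule T_repr) simp
    have wk: "AE x in M. w x * k x * (\<phi> x - l) = T g x"
      using Tg dl by eventually_elim (use d0 in \<open>auto simp: k_def\<close>)
    have TgL2: "(\<lambda>x. (1 / \<delta>) * T g x) \<in> L2 M" by (rule L2_cmult[OF maps[OF gL2]])
    have wkL2: "(\<lambda>x. w x * k x) \<in> L2 M"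
    proof (rule L2_mono[OF TgL2])
      show "AE x in M. cmod (w x * k x) \<le> cmod ((1 / \<delta>) * T g x)"
        using wk dl
      proof eventually_elim
        case (elim x)
        note d0
        have "cmod (T g x) = cmod (w x * k x) * cmod (\<phi> x - l)" using elim(1) by (metis norm_mult)
        then have "cmod (w x * k x) = cmod (T g x) / cmod (\<phi> x - l)" using elim(2) d0 by auto
        also have "\<dots> \<le> cmod (T g x) / \<delta>" using elim(2) d0 by (intro divide_left_mono) (auto intro!: mult_pos_pos)
        finally show ?case using d0 by (simp add: norm_mult norm_divide)
      qed
    qed simp
    have mgL2: "(\<lambda>x. (-1) * g x) \<in> L2 M" by (rule L2_cmult[OF gL2])
    have sL2: "(\<lambda>x. w x * k x + (-1) * g x) \<in> L2 M" by (rule L2_add[OF wkL2 mgL2])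
    define f0 where "f0 = (\<lambda>x. (1 / l) * (w x * k x + (-1) * g x))"
    have f0L2: "f0 \<in> L2 M" unfolding f0_def by (rule L2_cmult[OF sL2])
    have t1: "AE x in M. T f0 x = (1 / l) * T (\<lambda>x. w x * k x + (-1) * g x) x"
      unfolding f0_def by (rule T_cmult[OF sL2])
    have t2: "AE x in M. T (\<lambda>x. w x * k x + (-1) * g x) x = T (\<lambda>x. w x * k x) x + T (\<lambda>x. (-1) * g x) x"
      by (rule T_add[OF wkL2 mgL2])
    have t3: "AE x in M. T (\<lambda>x. (-1) * g x) x = (-1) * T g x" by (rule T_cmult[OF gL2])
    have t4: "AE x in M. T (\<lambda>x. w x * k x) x = w x * k x * \<phi> x" by (rule T_pull) simp
    have "AE x in M. T f0 x - l * f0 x = g x"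
      using t1 t2 t3 t4 wk
    proof eventually_elim
      case (elim x)
      have "T f0 x = (1 / l) * (w x * k x * \<phi> x - w x * k x * (\<phi> x - l))"
        using elim by simp
      also have "\<dots> = w x * k x" using l0 by (simp add: field_simps)
      finally show ?case using l0 unfolding f0_def by (simp add: field_simps)
    qed
    then show ?thesis using f0L2 by blast
  qed
  have inj: "AE x in M. f x = 0" if fL2: "f \<in> L2 M" and z: "AE x in M. T f x - l * f x = 0" for f
  proof -
    have [measurable]: "f \<in> borel_measurable M" using L2_meas[OF fL2] .
    define k where "k = (\<lambda>x. cond_exp_c M F (\<lambda>x. uP x * f x) x / l)"
    have k_meas[measurable]: "k \<in> borel_measurable F" unfolding k_def by measurable
    have kM[measurable]: "k \<in> borel_measurable M" using F_meas_M[OF k_meas] .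
    have Tf: "AE x in M. T f x = w x * cond_exp_c M F (\<lambda>x. uP x * f x) x" by (rule T_repr) simp
    have fe: "AE x in M. f x = w x * k x" using Tf z by eventually_elim (use l0 in \<open>auto simp: k_def field_simps\<close>)
    have Tc: "AE x in M. T f x = T (\<lambda>x. w x * k x) x" by (rule T_cong) (use fe in auto)
    have t4: "AE x in M. T (\<lambda>x. w x * k x) x = w x * k x * \<phi> x" by (rule T_pull) simp
    show ?thesis using fe Tc t4 z dl
    proof eventually_elim
      case (elim x)
      have "w x * k x * (\<phi> x - l) = 0" using elim(1-4) by (simp add: algebra_simps)
      moreover have "\<phi> x - l \<noteq> 0" using elim(5) d0 by auto
      ultimately show ?case using elim(1) by simp
    qed
  qed
  show ?thesis unfolding L2_spectrum_def using surj inj by blast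
qed

end

lemma AE_False_iff: "(AE x in M. False) \<longleftrightarrow> emeasure M (space M) = 0"
  using ae_filter_eq_bot_iff[of M] trivial_limit_def[of "ae_filter M"] by blast

context wce_setting
begin

lemma rhoL2: "(\<lambda>x. complex_of_real (\<rho> x)) \<in> L2 M"
proof -
  have "integrable M (\<lambda>x. (cmod (complex_of_real (\<rho> x)))\<^sup>2)"
    by (rule Bochner_Integration.integrable_bound[OF rho_props(4)])
       (use rho_props in \<open>auto simp: power2_eq_square abs_of_pos intro!: mult_left_le_one_le less_imp_le\<close>)
  then show ?thesis unfolding L2_def by auto
qed

lemma zero_spec:
  assumes phi0: "AE x in M. \<phi> x = 0" and nz: "emeasure M (space M) \<noteq> 0"
  shows "0 \<in> L2_spectrum M T"
proof (rule ccontr)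
  assume "0 \<notin> L2_spectrum M T"
  then have inj: "\<And>f. f \<in> L2 M \<Longrightarrow> (AE x in M. T f x - 0 * f x = 0) \<Longrightarrow> (AE x in M. f x = 0)"
    unfolding L2_spectrum_def by blast
  have T0: "AE x in M. f x = 0" if fL2: "f \<in> L2 M" for f
  proof -
    have [measurable]: "f \<in> borel_measurable M" using L2_meas[OF fL2] .
    define k where "k = cond_exp_c M F (\<lambda>x. uP x * f x)"
    have k_meas[measurable]: "k \<in> borel_measurable F" unfolding k_def by measurable
    have kM[measurable]: "k \<in> borel_measurable M" using F_meas_M[OF k_meas] .
    have Tf: "AE x in M. T f x = w x * k x" unfolding k_def by (rule T_repr) simp
    have Tc: "AE x in M. T (T f) x = T (\<lambda>x. w x * k x) x" by (rule T_cong) (use Tf in auto)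
    have t4: "AE x in M. T (\<lambda>x. w x * k x) x = w x * k x * \<phi> x" by (rule T_pull) simp
    have "AE x in M. T (T f) x - 0 * T f x = 0" using Tc t4 phi0 by eventually_elim simp
    then have "AE x in M. T f x = 0" using inj[OF maps[OF fL2]] by simp
    then have "AE x in M. T f x - 0 * f x = 0" by simp
    then show ?thesis by (rule inj[OF fL2])
  qed
  have "AE x in M. complex_of_real (\<rho> x) = 0" by (rule T0[OF rhoL2])
  then have "AE x in M. False" using rho_props(2) by (auto elim!: eventually_mono simp: less_le)
  then show False using nz by (simp add: AE_False_iff)
qed

lemma phiB_F: "{x \<in> space M. Q (\<phi> x)} \<in> sets F" if "Measurable.pred borel Q"
  by (rule setF[OF phi_meas(1)]) (use that in auto)

lemma eigen_spec:
  assumes l0: "l \<noteq> 0" and pos: "emeasure M {x \<in> space M. \<phi> x = l} \<noteq> 0"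
  shows "l \<in> L2_spectrum M T"
proof (rule ccontr)
  assume "l \<notin> L2_spectrum M T"
  then have inj: "\<And>f. f \<in> L2 M \<Longrightarrow> (AE x in M. T f x - l * f x = 0) \<Longrightarrow> (AE x in M. f x = 0)"
    unfolding L2_spectrum_def by blast
  define B where "B = {x \<in> space M. \<phi> x = l}"
  have BF[measurable]: "B \<in> sets F" unfolding B_def by (rule phiB_F) measurable
  have BM[measurable]: "B \<in> sets M" using sets_F_M[OF BF] .
  define k where "k = (\<lambda>x. complex_of_real (indicator B x * cW x))"
  have k_meas[measurable]: "k \<in> borel_measurable F" unfolding k_def by measurable
  have kM[measurable]: "k \<in> borel_measurable M" using F_meas_M[OF k_meas] .
  have int: "(\<integral>\<^sup>+ x. ennreal ((cmod (w x * k x))\<^sup>2) \<partial>M) = (\<integral>\<^sup>+ x. ennreal ((cmod (k x))\<^sup>2) * W x \<partial>M)"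
    by (rule WK) simp
  have le: "(\<integral>\<^sup>+ x. ennreal ((cmod (k x))\<^sup>2) * W x \<partial>M) \<le> (\<integral>\<^sup>+ x. ennreal (\<rho> x) \<partial>M)"
  proof (rule nn_integral_mono)
    fix x
    have "ennreal ((cmod (k x))\<^sup>2) * W x \<le> ennreal ((cW x)\<^sup>2) * W x"
      unfolding k_def using cW_pos[of x] by (intro mult_right_mono ennreal_leI) (auto simp: indicator_def)
    also have "\<dots> \<le> ennreal (\<rho> x)" by (rule cW_W)
    finally show "ennreal ((cmod (k x))\<^sup>2) * W x \<le> ennreal (\<rho> x)" .
  qed
  have fL2: "(\<lambda>x. w x * k x) \<in> L2 M"
    by (rule L2_of_nn) (use int le rho_fin in auto)
  have t4: "AE x in M. T (\<lambda>x. w x * k x) x = w x * k x * \<phi> x" by (rule T_pull) simp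
  have "AE x in M. T (\<lambda>x. w x * k x) x - l * (w x * k x) = 0"
    using t4 by eventually_elim (auto simp: k_def B_def indicator_def)
  then have z: "AE x in M. w x * k x = 0" by (rule inj[OF fL2])
  have "(\<integral>\<^sup>+ x. ennreal ((cmod (k x))\<^sup>2) * W x \<partial>M) = 0"
    unfolding int[symmetric] using z by (auto intro!: nn_integral_0_iff_AE[THEN iffD2] elim!: eventually_mono)
  then have z2: "AE x in M. ennreal ((cmod (k x))\<^sup>2) * W x = 0"
    by (subst (asm) nn_integral_0_iff_AE) auto
  have "AE x in M. x \<notin> B" using z2 phi_vanish
  proof eventually_elim
    case (elim x)
    show ?case
    proof
      assume xB: "x \<in> B"
      then have "\<phi> x \<noteq> 0" using l0 by (simp add: B_def)
      then have W: "0 < W x" "W x \<noteq> \<infinity>" using elim(2) by auto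
      have "cW x > 0" using cW_pos2[OF W(2)] .
      then have "ennreal ((cmod (k x))\<^sup>2) > 0" using xB by (simp add: k_def)
      then show False using elim(1) W(1) by (simp add: mult_eq_0_iff zero_less_iff_neq_zero)
    qed
  qed
  then have "B \<in> null_sets M" by (subst AE_iff_null_sets[OF BM])
  then show False using pos unfolding B_def by auto
qed

end

definition idx :: "real \<Rightarrow> nat" where "idx s = (LEAST m. (1/2::real)^(Suc m) \<le> s)"

lemma idx_props:
  fixes s :: real assumes "0 < s" "s < 1"
  shows "(1/2)^(Suc (idx s)) \<le> s" "s < (1/2)^(idx s)"
proof -
  obtain n where n: "(1/2::real)^n < s" using real_arch_pow_inv[OF assms(1), of "1/2"] by auto
  have "(1/2::real)^(Suc n) \<le> (1/2)^n" by (rule power_decreasing) auto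
  then have ex: "(1/2::real)^(Suc n) \<le> s" using n by linarith
  show a: "(1/2)^(Suc (idx s)) \<le> s" unfolding idx_def by (rule LeastI[of _ n]) (rule ex)
  show "s < (1/2)^(idx s)"
  proof (cases "idx s")
    case 0 then show ?thesis using assms by simp
  next
    case (Suc j)
    have "j < idx s" using Suc by simp
    then have "\<not> (1/2::real)^(Suc j) \<le> s" unfolding idx_def by (rule not_less_Least)
    then show ?thesis using Suc by simp
  qed
qed

lemma idx_unique:
  fixes s :: real assumes "(1/2)^(Suc j) \<le> s" "s < (1/2)^j"
  shows "idx s = j"
  unfolding idx_def
proof (rule Least_equality)
  show "(1/2::real)^(Suc j) \<le> s" by (rule assms(1))
  fix m assume m: "(1/2::real)^(Suc m) \<le> s"
  show "j \<le> m"
  proof (rule ccontr)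
    assume "\<not> j \<le> m"
    then have "Suc m \<le> j" by simp
    then have "(1/2::real)^j \<le> (1/2)^(Suc m)" by (rule power_decreasing) auto
    then show False using m assms(2) by simp
  qed
qed

lemma idx_meas[measurable]:
  assumes [measurable]: "f \<in> borel_measurable N"
  shows "(\<lambda>x. idx (f x)) \<in> measurable N (count_space UNIV)"
  unfolding idx_def by measurable

lemma inf_ones:
  assumes "infinite {m::nat. Q m}"
  shows "(\<Sum>m. (if Q m then 1 else 0 :: ennreal)) = \<infinity>"
proof (rule ccontr)
  assume ne: "(\<Sum>m. (if Q m then 1 else 0 :: ennreal)) \<noteq> \<infinity>"
  have e: "(\<lambda>m. (if Q m then 1 else 0 :: ennreal)) = (\<lambda>m. ennreal (if Q m then 1 else 0))" by auto
  have "summable (\<lambda>m. (if Q m then 1 else 0 :: real))"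
    by (rule summable_suminf_not_top) (use ne e in auto)
  then have "(\<lambda>m. (if Q m then 1 else 0 :: real)) \<longlonglongrightarrow> 0" by (rule summable_LIMSEQ_zero)
  then have "eventually (\<lambda>m. dist (if Q m then 1 else 0 :: real) 0 < 1/2) sequentially"
    by (rule tendstoD) simp
  then obtain N where "\<And>m. m \<ge> N \<Longrightarrow> dist (if Q m then 1 else 0 :: real) 0 < 1/2"
    by (auto simp: eventually_sequentially)
  then have "\<And>m. m \<ge> N \<Longrightarrow> \<not> Q m" by (force split: if_splits)
  then have "{m. Q m} \<subseteq> {..<N}" by (auto simp: not_le[symmetric])
  then have "finite {m. Q m}" by (rule finite_subset) simp
  then show False using assms by simp
qed


context wce_setting
begin

definition "tt l x = cmod (\<phi> x - l)"
definition "Sh l m = {x \<in> space M. (1/2)^(Suc m) \<le> tt l x \<and> tt l x < (1/2)^m}"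
definition "nu l m = (\<integral>\<^sup>+ x. indicator (Sh l m) x * (ennreal ((cW x)\<^sup>2) * W x) \<partial>M)"
definition "aa l m0 m = (if m0 \<le> m \<and> nu l m \<noteq> 0 then sqrt ((1/4)^m / enn2real (nu l m)) else 0)"
definition "Vs l = {x \<in> space M. 0 < tt l x \<and> tt l x < 1}"
definition "kk l m0 x = complex_of_real (indicator (Vs l) x * cW x * aa l m0 (idx (tt l x)))"

lemma tt_meas[measurable]: "tt l \<in> borel_measurable F" "tt l \<in> borel_measurable M"
proof -
  show "tt l \<in> borel_measurable F" unfolding tt_def by measurable
  then show "tt l \<in> borel_measurable M" by (rule F_meas_M)
qed

lemma Sh_F[measurable]: "Sh l m \<in> sets F"
  unfolding Sh_def by (rule setF[OF tt_meas(1)]) measurable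

lemma Sh_M[measurable]: "Sh l m \<in> sets M" using sets_F_M[OF Sh_F] .

lemma Vs_F[measurable]: "Vs l \<in> sets F"
  unfolding Vs_def by (rule setF[OF tt_meas(1)]) measurable

lemma kk_meas[measurable]: "kk l m0 \<in> borel_measurable F" "kk l m0 \<in> borel_measurable M"
proof -
  have [measurable]: "(\<lambda>x. idx (tt l x)) \<in> measurable F (count_space UNIV)" by measurable
  have "(\<lambda>x. aa l m0 (idx (tt l x))) \<in> borel_measurable F"
    by (rule measurable_compose[of _ _ "count_space UNIV"]) auto
  then show "kk l m0 \<in> borel_measurable F" unfolding kk_def by measurable
  then show "kk l m0 \<in> borel_measurable M" by (rule F_meas_M)
qed

lemma nu_fin: "nu l m < \<infinity>"
proof -
  have "nu l m \<le> (\<integral>\<^sup>+ x. ennreal (\<rho> x) \<partial>M)" unfolding nu_def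
  proof (rule nn_integral_mono)
    fix x
    have "indicator (Sh l m) x * (ennreal ((cW x)\<^sup>2) * W x) \<le> ennreal ((cW x)\<^sup>2) * W x"
      by (auto simp: indicator_def)
    also have "\<dots> \<le> ennreal (\<rho> x)" by (rule cW_W)
    finally show "indicator (Sh l m) x * (ennreal ((cW x)\<^sup>2) * W x) \<le> ennreal (\<rho> x)" .
  qed
  then show ?thesis using rho_fin by (simp add: le_less_trans)
qed

lemma Sh_in: "x \<in> Sh l m \<Longrightarrow> x \<in> Vs l \<and> idx (tt l x) = m"
proof -
  assume x: "x \<in> Sh l m"
  have "0 < (1/2::real)^(Suc m)" by simp
  moreover have "(1/2::real)^m \<le> 1" by (simp add: power_le_one)
  ultimately show ?thesis using x idx_unique[of m "tt l x"] unfolding Sh_def Vs_def by auto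
qed

lemma Vs_in: "x \<in> Vs l \<Longrightarrow> x \<in> Sh l (idx (tt l x))"
  using idx_props[of "tt l x"] unfolding Sh_def Vs_def by auto

lemma single_sum:
  fixes g :: "nat \<Rightarrow> ennreal"
  assumes "\<And>m. m \<noteq> i \<Longrightarrow> g m = 0"
  shows "(\<Sum>m. g m) = g i"
  using suminf_finite[of "{i}" g] assms by auto

lemma D1:
  "ennreal ((cmod (kk l m0 x))\<^sup>2) * W x = (\<Sum>m. indicator (Sh l m) x * (ennreal ((aa l m0 m)\<^sup>2) * (ennreal ((cW x)\<^sup>2) * W x)))"
proof (cases "x \<in> Vs l")
  case True
  define i where "i = idx (tt l x)"
  have xi: "x \<in> Sh l i" unfolding i_def by (rule Vs_in[OF True])
  have "(\<Sum>m. indicator (Sh l m) x * (ennreal ((aa l m0 m)\<^sup>2) * (ennreal ((cW x)\<^sup>2) * W x)))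
     = indicator (Sh l i) x * (ennreal ((aa l m0 i)\<^sup>2) * (ennreal ((cW x)\<^sup>2) * W x))"
    by (rule single_sum) (use Sh_in in \<open>force simp: i_def indicator_def\<close>)
  also have "\<dots> = ennreal ((aa l m0 i)\<^sup>2) * ennreal ((cW x)\<^sup>2) * W x" using xi by (simp add: mult.assoc)
  also have "\<dots> = ennreal ((cmod (kk l m0 x))\<^sup>2) * W x"
  proof -
    have ck: "(cmod (kk l m0 x))\<^sup>2 = (aa l m0 i)\<^sup>2 * (cW x)\<^sup>2"
      using True by (simp add: kk_def i_def norm_mult power_mult_distrib)
    have e: "ennreal ((aa l m0 i)\<^sup>2 * (cW x)\<^sup>2) = ennreal ((aa l m0 i)\<^sup>2) * ennreal ((cW x)\<^sup>2)"
      by (rule ennreal_mult) auto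
    show ?thesis unfolding ck e ..
  qed
  finally show ?thesis by simp
next
  case False
  have "x \<notin> Sh l m" for m using Sh_in False by blast
  then show ?thesis using False by (simp add: kk_def)
qed

lemma D2:
  assumes "\<phi> x \<noteq> l"
  shows "(\<Sum>m. indicator (Sh l m) x * (ennreal ((aa l m0 m)\<^sup>2 * 4^m) * (ennreal ((cW x)\<^sup>2) * W x)))
     \<le> ennreal ((cmod (kk l m0 x / (\<phi> x - l)))\<^sup>2) * W x"
proof (cases "x \<in> Vs l")
  case True
  define i where "i = idx (tt l x)"
  have xi: "x \<in> Sh l i" unfolding i_def by (rule Vs_in[OF True])
  have t: "0 < tt l x" "tt l x < (1/2)^i" using xi True unfolding Sh_def Vs_def by auto
  have "(\<Sum>m. indicator (Sh l m) x * (ennreal ((aa l m0 m)\<^sup>2 * 4^m) * (ennreal ((cW x)\<^sup>2) * W x)))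
     = indicator (Sh l i) x * (ennreal ((aa l m0 i)\<^sup>2 * 4^i) * (ennreal ((cW x)\<^sup>2) * W x))"
    by (rule single_sum) (use Sh_in in \<open>force simp: i_def indicator_def\<close>)
  also have "\<dots> = ennreal ((aa l m0 i)\<^sup>2 * 4^i * (cW x)\<^sup>2) * W x"
  proof -
    have e: "ennreal ((aa l m0 i)\<^sup>2 * 4^i * (cW x)\<^sup>2) = ennreal ((aa l m0 i)\<^sup>2 * 4^i) * ennreal ((cW x)\<^sup>2)"
      by (rule ennreal_mult) auto
    show ?thesis unfolding e using xi by (simp add: mult.assoc)
  qed
  also have "\<dots> \<le> ennreal ((cmod (kk l m0 x / (\<phi> x - l)))\<^sup>2) * W x"
  proof (intro mult_right_mono ennreal_leI)
    have "(tt l x)\<^sup>2 < ((1/2)^i)\<^sup>2" using t by (intro power_strict_mono) auto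
    moreover have "((1/2::real)^i)\<^sup>2 = 1 / 4^i"
    proof -
      have "(2::real)^i * 2^i = 4^i" by (simp add: power_mult_distrib[symmetric])
      then show ?thesis by (simp add: power2_eq_square power_divide)
    qed
    ultimately have "(tt l x)\<^sup>2 < 1 / 4^i" by simp
    then have tt2: "(tt l x)\<^sup>2 * 4^i < 1" by (simp add: less_divide_eq)
    have "(cmod (kk l m0 x / (\<phi> x - l)))\<^sup>2 = (aa l m0 i * cW x)\<^sup>2 / (tt l x)\<^sup>2"
      using True by (simp add: kk_def i_def tt_def norm_divide power_divide norm_mult power_mult_distrib mult.commute)
    also have "\<dots> \<ge> (aa l m0 i)\<^sup>2 * 4^i * (cW x)\<^sup>2"
    proof -
      have "(aa l m0 i)\<^sup>2 * 4^i * (cW x)\<^sup>2 * (tt l x)\<^sup>2 \<le> (aa l m0 i * cW x)\<^sup>2"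
      proof -
        have "(aa l m0 i)\<^sup>2 * 4^i * (cW x)\<^sup>2 * (tt l x)\<^sup>2 = (aa l m0 i * cW x)\<^sup>2 * ((tt l x)\<^sup>2 * 4^i)"
          by (simp add: power_mult_distrib algebra_simps)
        also have "\<dots> \<le> (aa l m0 i * cW x)\<^sup>2 * 1" using tt2 by (intro mult_left_mono) auto
        finally show ?thesis by simp
      qed
      then show ?thesis using t by (simp add: pos_le_divide_eq)
    qed
    finally show "(aa l m0 i)\<^sup>2 * 4^i * (cW x)\<^sup>2 \<le> (cmod (kk l m0 x / (\<phi> x - l)))\<^sup>2" .
  qed auto
  finally show ?thesis .
next
  case False
  have "x \<notin> Sh l m" for m using Sh_in False by blast
  then show ?thesis by simp
qed

end

context wce_setting
begin

lemma H_meas[measurable]: "(\<lambda>x. ennreal ((cW x)\<^sup>2) * W x) \<in> borel_measurable M" by measurable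

lemma int_decomp:
  fixes c :: "nat \<Rightarrow> real"
  shows "(\<integral>\<^sup>+ x. (\<Sum>m. indicator (Sh l m) x * (ennreal (c m) * (ennreal ((cW x)\<^sup>2) * W x))) \<partial>M)
    = (\<Sum>m. ennreal (c m) * nu l m)"
proof -
  have "(\<integral>\<^sup>+ x. (\<Sum>m. indicator (Sh l m) x * (ennreal (c m) * (ennreal ((cW x)\<^sup>2) * W x))) \<partial>M)
    = (\<Sum>m. \<integral>\<^sup>+ x. indicator (Sh l m) x * (ennreal (c m) * (ennreal ((cW x)\<^sup>2) * W x)) \<partial>M)"
    by (rule nn_integral_suminf) measurable
  also have "\<dots> = (\<Sum>m. ennreal (c m) * nu l m)"
  proof (rule suminf_cong)
    fix m
    have "(\<integral>\<^sup>+ x. indicator (Sh l m) x * (ennreal (c m) * (ennreal ((cW x)\<^sup>2) * W x)) \<partial>M)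
      = (\<integral>\<^sup>+ x. ennreal (c m) * (indicator (Sh l m) x * (ennreal ((cW x)\<^sup>2) * W x)) \<partial>M)"
      by (simp add: mult.left_commute)
    also have "\<dots> = ennreal (c m) * nu l m" unfolding nu_def by (rule nn_integral_cmult) measurable
    finally show "(\<integral>\<^sup>+ x. indicator (Sh l m) x * (ennreal (c m) * (ennreal ((cW x)\<^sup>2) * W x)) \<partial>M) = ennreal (c m) * nu l m" .
  qed
  finally show ?thesis .
qed

lemma aa_sq: "m0 \<le> m \<Longrightarrow> nu l m \<noteq> 0 \<Longrightarrow> (aa l m0 m)\<^sup>2 = (1/4)^m / enn2real (nu l m)"
proof -
  assume a: "m0 \<le> m" "nu l m \<noteq> 0"
  have nn: "0 \<le> (1/4::real)^m / enn2real (nu l m)" by (intro divide_nonneg_nonneg) auto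
  have "aa l m0 m = sqrt ((1/4)^m / enn2real (nu l m))" using a unfolding aa_def by simp
  then show ?thesis using real_sqrt_pow2[OF nn] by simp
qed

lemma nu_real: "nu l m \<noteq> 0 \<Longrightarrow> nu l m = ennreal (enn2real (nu l m)) \<and> enn2real (nu l m) > 0"
proof -
  assume nz: "nu l m \<noteq> 0"
  obtain v where v: "nu l m = ennreal v" "v \<ge> 0" using nu_fin[of l m] by (cases "nu l m") auto
  have "v \<noteq> 0" using nz v by auto
  then show ?thesis using v by simp
qed

lemma term1: "ennreal ((aa l m0 m)\<^sup>2) * nu l m \<le> ennreal ((1/4)^m)"
proof (cases "m0 \<le> m \<and> nu l m \<noteq> 0")
  case True
  define v where "v = enn2real (nu l m)"
  have v: "nu l m = ennreal v" "v > 0" using nu_real[of l m] True unfolding v_def by auto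
  have sq: "(aa l m0 m)\<^sup>2 = (1/4)^m / v" using aa_sq[of m0 m l] True unfolding v_def by simp
  have "ennreal ((aa l m0 m)\<^sup>2) * nu l m = ennreal ((1/4)^m / v) * ennreal v" unfolding sq v(1) ..
  also have "\<dots> = ennreal ((1/4)^m / v * v)" by (rule ennreal_mult[symmetric]) (use v in auto)
  also have "(1/4::real)^m / v * v = (1/4)^m" using v by simp
  finally show ?thesis by simp
next
  case False then show ?thesis by (auto simp: aa_def)
qed

lemma term2: "ennreal ((aa l m0 m)\<^sup>2 * 4^m) * nu l m = (if m0 \<le> m \<and> nu l m \<noteq> 0 then 1 else 0)"
proof (cases "m0 \<le> m \<and> nu l m \<noteq> 0")
  case True
  define v where "v = enn2real (nu l m)"
  have v: "nu l m = ennreal v" "v > 0" using nu_real[of l m] True unfolding v_def by auto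
  have sq: "(aa l m0 m)\<^sup>2 = (1/4)^m / v" using aa_sq[of m0 m l] True unfolding v_def by simp
  have "ennreal ((aa l m0 m)\<^sup>2 * 4^m) * nu l m = ennreal ((1/4)^m / v * 4^m) * ennreal v" unfolding sq v(1) ..
  also have "\<dots> = ennreal ((1/4)^m / v * 4^m * v)" by (rule ennreal_mult[symmetric]) (use v in auto)
  also have "(1/4::real)^m / v * 4^m * v = (1/4)^m * 4^m" using v by simp
  also have "(1/4::real)^m * 4^m = 1" by (simp add: power_mult_distrib[symmetric])
  finally show ?thesis using True by simp
next
  case False then show ?thesis by (auto simp: aa_def)
qed

lemma I1: "(\<integral>\<^sup>+ x. ennreal ((cmod (kk l m0 x))\<^sup>2) * W x \<partial>M) < \<infinity>"
proof -
  have "(\<integral>\<^sup>+ x. ennreal ((cmod (kk l m0 x))\<^sup>2) * W x \<partial>M)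
     = (\<integral>\<^sup>+ x. (\<Sum>m. indicator (Sh l m) x * (ennreal ((aa l m0 m)\<^sup>2) * (ennreal ((cW x)\<^sup>2) * W x))) \<partial>M)"
    by (rule nn_integral_cong) (rule D1)
  also have "\<dots> = (\<Sum>m. ennreal ((aa l m0 m)\<^sup>2) * nu l m)" by (rule int_decomp)
  also have "\<dots> \<le> (\<Sum>m. ennreal ((1/4)^m))" by (rule suminf_le) (simp_all add: term1)
  also have "\<dots> < \<infinity>"
  proof -
    have "summable (\<lambda>m. (1/4::real)^m)" by (rule summable_geometric) simp
    then have "(\<Sum>m. ennreal ((1/4::real)^m)) \<noteq> top" by (rule ennreal_suminf_neq_top) simp
    then show ?thesis by (simp add: top.not_eq_extremum)
  qed
  finally show ?thesis .
qed

lemma Sh_pos: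
  assumes m: "(1/2)^m \<le> cmod l"
  shows "AE x in M. x \<in> Sh l m \<longrightarrow> 0 < ennreal ((cW x)\<^sup>2) * W x"
  using phi_vanish
proof eventually_elim
  case (elim x)
  show ?case
  proof
    assume x: "x \<in> Sh l m"
    then have "cmod (\<phi> x - l) < cmod l" using m unfolding Sh_def tt_def by auto
    then have "\<phi> x \<noteq> 0" by auto
    then have W: "0 < W x" "W x \<noteq> \<infinity>" using elim by auto
    have "cW x > 0" using cW_pos2[OF W(2)] .
    then show "0 < ennreal ((cW x)\<^sup>2) * W x" using W(1) by (simp add: zero_less_iff_neq_zero mult_eq_0_iff)
  qed
qed

lemma nu_zero_null:
  assumes m: "(1/2)^m \<le> cmod l" and z: "nu l m = 0"
  shows "Sh l m \<in> null_sets M"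
proof -
  have "AE x in M. indicator (Sh l m) x * (ennreal ((cW x)\<^sup>2) * W x) = 0"
    using z unfolding nu_def by (subst (asm) nn_integral_0_iff_AE) auto
  then have "AE x in M. x \<notin> Sh l m" using Sh_pos[OF m]
    by eventually_elim (auto simp: indicator_def)
  then show ?thesis by (subst AE_iff_null_sets) auto
qed

lemma infinitely_many:
  assumes m0: "(1/2)^m0 < cmod l" and eq0: "emeasure M {x \<in> space M. \<phi> x = l} = 0"
    and ess: "\<And>e. e > 0 \<Longrightarrow> emeasure M {x \<in> space M. cmod (\<phi> x - l) < e} \<noteq> 0"
  shows "infinite {m. m0 \<le> m \<and> nu l m \<noteq> 0}"
  unfolding infinite_nat_iff_unbounded_le
proof
  fix n
  define n' where "n' = max n m0"
  show "\<exists>m\<ge>n. m \<in> {m. m0 \<le> m \<and> nu l m \<noteq> 0}"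
  proof (rule ccontr)
    assume "\<not> (\<exists>m\<ge>n. m \<in> {m. m0 \<le> m \<and> nu l m \<noteq> 0})"
    then have z: "\<And>m. m \<ge> n' \<Longrightarrow> nu l m = 0" unfolding n'_def by auto
    have null: "Sh l (m + n') \<in> null_sets M" for m
    proof (rule nu_zero_null)
      have "(1/2::real)^(m + n') \<le> (1/2)^m0" by (rule power_decreasing) (auto simp: n'_def)
      then show "(1/2)^(m + n') \<le> cmod l" using less_imp_le[OF m0] by (rule order_trans)
    qed (rule z, simp)
    have U: "(\<Union>m. Sh l (m + n')) \<in> null_sets M" using null by auto
    have E: "{x \<in> space M. \<phi> x = l} \<in> null_sets M"
      using eq0 by (auto intro!: setF[OF phi_meas(1), THEN sets_F_M])
    have sub: "{x \<in> space M. cmod (\<phi> x - l) < (1/2)^n'} \<subseteq> {x \<in> space M. \<phi> x = l} \<union> (\<Union>m. Sh l (m + n'))"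
    proof
      fix x assume x: "x \<in> {x \<in> space M. cmod (\<phi> x - l) < (1/2)^n'}"
      show "x \<in> {x \<in> space M. \<phi> x = l} \<union> (\<Union>m. Sh l (m + n'))"
      proof (cases "\<phi> x = l")
        case False
        have le1: "(1/2::real)^n' \<le> 1" by (simp add: power_le_one)
        have Vx: "x \<in> Vs l" using x False le1 unfolding Vs_def tt_def by auto
        have S: "x \<in> Sh l (idx (tt l x))" by (rule Vs_in[OF Vx])
        have "n' \<le> idx (tt l x)"
        proof (rule ccontr)
          assume "\<not> n' \<le> idx (tt l x)"
          then have "Suc (idx (tt l x)) \<le> n'" by simp
          then have "(1/2::real)^n' \<le> (1/2)^(Suc (idx (tt l x)))" by (rule power_decreasing) auto
          then show False using S x unfolding Sh_def tt_def by auto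
        qed
        then obtain m where "idx (tt l x) = m + n'" by (metis add.commute le_Suc_ex)
        then show ?thesis using S by auto
      qed (use x in auto)
    qed
    have "{x \<in> space M. cmod (\<phi> x - l) < (1/2)^n'} \<in> null_sets M"
      by (rule null_sets_subset[OF _ _ sub]) (use U E in auto)
    then show False using ess[of "(1/2)^n'"] by auto
  qed
qed

lemma I2:
  assumes m0: "(1/2)^m0 < cmod l" and eq0: "emeasure M {x \<in> space M. \<phi> x = l} = 0"
    and ess: "\<And>e. e > 0 \<Longrightarrow> emeasure M {x \<in> space M. cmod (\<phi> x - l) < e} \<noteq> 0"
  shows "(\<integral>\<^sup>+ x. ennreal ((cmod (kk l m0 x / (\<phi> x - l)))\<^sup>2) * W x \<partial>M) = \<infinity>"
proof -
  have E: "{x \<in> space M. \<phi> x = l} \<in> null_sets M"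
    using eq0 by (auto intro!: setF[OF phi_meas(1), THEN sets_F_M])
  have ne: "AE x in M. \<phi> x \<noteq> l" using AE_iff_null_sets[THEN iffD1, OF _ E] by auto
  have "\<infinity> = (\<Sum>m. (if m0 \<le> m \<and> nu l m \<noteq> 0 then 1 else 0 :: ennreal))"
    by (rule inf_ones[symmetric]) (rule infinitely_many[OF m0 eq0 ess])
  also have "\<dots> = (\<Sum>m. ennreal ((aa l m0 m)\<^sup>2 * 4^m) * nu l m)" by (simp add: term2)
  also have "\<dots> = (\<integral>\<^sup>+ x. (\<Sum>m. indicator (Sh l m) x * (ennreal ((aa l m0 m)\<^sup>2 * 4^m) * (ennreal ((cW x)\<^sup>2) * W x))) \<partial>M)"
    by (rule int_decomp[symmetric])
  also have "\<dots> \<le> (\<integral>\<^sup>+ x. ennreal ((cmod (kk l m0 x / (\<phi> x - l)))\<^sup>2) * W x \<partial>M)"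
    by (rule nn_integral_mono_AE) (use ne in \<open>auto elim!: eventually_mono intro: D2\<close>)
  finally show ?thesis by (simp add: top_unique)
qed

end

context wce_setting
begin

lemma shell_spec:
  assumes l0: "l \<noteq> 0" and eq0: "emeasure M {x \<in> space M. \<phi> x = l} = 0"
    and ess: "\<And>e. e > 0 \<Longrightarrow> emeasure M {x \<in> space M. cmod (\<phi> x - l) < e} \<noteq> 0"
  shows "l \<in> L2_spectrum M T"
proof (rule ccontr)
  assume "l \<notin> L2_spectrum M T"
  then have surj: "\<And>g. g \<in> L2 M \<Longrightarrow> \<exists>f\<in>L2 M. AE x in M. T f x - l * f x = g x"
    unfolding L2_spectrum_def by blast
  obtain m0 where m0: "(1/2::real)^m0 < cmod l" using real_arch_pow_inv[of "cmod l" "1/2"] l0 by auto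
  define k where "k = kk l m0"
  have k_meas[measurable]: "k \<in> borel_measurable F" unfolding k_def by simp
  have kM[measurable]: "k \<in> borel_measurable M" unfolding k_def by simp
  have gL2: "(\<lambda>x. w x * k x) \<in> L2 M"
    by (rule L2_of_nn) (use WK[OF k_meas] I1[of l m0] in \<open>auto simp: k_def\<close>)
  obtain f where fL2: "f \<in> L2 M" and fe: "AE x in M. T f x - l * f x = w x * k x"
    using surj[OF gL2] by blast
  have [measurable]: "f \<in> borel_measurable M" using L2_meas[OF fL2] .
  define m' where "m' = (\<lambda>x. (cond_exp_c M F (\<lambda>x. uP x * f x) x - k x) / l)"
  have m_meas[measurable]: "m' \<in> borel_measurable F" unfolding m'_def by measurable
  have mM[measurable]: "m' \<in> borel_measurable M" using F_meas_M[OF m_meas] .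
  have Tf: "AE x in M. T f x = w x * cond_exp_c M F (\<lambda>x. uP x * f x) x" by (rule T_repr) simp
  have fm: "AE x in M. f x = w x * m' x" using Tf fe
    by eventually_elim (use l0 in \<open>auto simp: m'_def field_simps\<close>)
  have Tc: "AE x in M. T f x = T (\<lambda>x. w x * m' x) x" by (rule T_cong) (use fm in auto)
  have t4: "AE x in M. T (\<lambda>x. w x * m' x) x = w x * m' x * \<phi> x" by (rule T_pull) simp
  have E: "{x \<in> space M. \<phi> x = l} \<in> null_sets M"
    using eq0 by (auto intro!: setF[OF phi_meas(1), THEN sets_F_M])
  have ne: "AE x in M. \<phi> x \<noteq> l" using AE_iff_null_sets[THEN iffD1, OF _ E] by auto
  define q where "q = (\<lambda>x. k x / (\<phi> x - l))"
  have q_meas[measurable]: "q \<in> borel_measurable F" unfolding q_def by measurable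
  have fq: "AE x in M. f x = w x * q x" using fm Tc t4 fe ne
  proof eventually_elim
    case (elim x)
    have "w x * m' x * (\<phi> x - l) = w x * k x" using elim(1-4) by (simp add: algebra_simps)
    then have "w x * m' x = w x * k x / (\<phi> x - l)" using elim(5) by (simp add: field_simps)
    then show ?case using elim(1) by (simp add: q_def)
  qed
  have "(\<integral>\<^sup>+ x. ennreal ((cmod (f x))\<^sup>2) \<partial>M) = (\<integral>\<^sup>+ x. ennreal ((cmod (w x * q x))\<^sup>2) \<partial>M)"
    by (rule nn_integral_cong_AE) (use fq in auto)
  also have "\<dots> = (\<integral>\<^sup>+ x. ennreal ((cmod (q x))\<^sup>2) * W x \<partial>M)" by (rule WK) simp
  also have "\<dots> = \<infinity>" unfolding q_def k_def by (rule I2[OF m0 eq0 ess])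
  finally show False using nn_of_L2[OF fL2] by simp
qed

lemma ess_point:
  fixes r :: real
  assumes r0: "r \<ge> 0" and pos: "emeasure M {x \<in> space M. r < cmod (\<phi> x)} \<noteq> 0"
  shows "\<exists>l. r < cmod l \<and> (\<forall>e>0. emeasure M {x \<in> space M. cmod (\<phi> x - l) < e} \<noteq> 0)"
proof -
  define A where "A = (\<lambda>n::nat. {x \<in> space M. r + 1 / Suc n \<le> cmod (\<phi> x) \<and> cmod (\<phi> x) \<le> real n})"
  have AM: "A n \<in> sets M" for n unfolding A_def by measurable
  have "\<exists>n. A n \<notin> null_sets M"
  proof (rule ccontr)
    assume "\<not> (\<exists>n. A n \<notin> null_sets M)"
    then have N: "(\<Union>n. A n) \<in> null_sets M" by auto
    have S: "{x \<in> space M. r < cmod (\<phi> x)} \<subseteq> (\<Union>n. A n)"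
    proof
      fix x assume x: "x \<in> {x \<in> space M. r < cmod (\<phi> x)}"
      then have d: "0 < cmod (\<phi> x) - r" by simp
      obtain n1 :: nat where n1: "1 / Suc n1 < cmod (\<phi> x) - r"
        using reals_Archimedean[OF d] by (auto simp: inverse_eq_divide)
      obtain n2 :: nat where n2: "cmod (\<phi> x) \<le> real n2" using real_arch_simple by blast
      define n where "n = max n1 n2"
      have "1 / real (Suc n) \<le> 1 / Suc n1" unfolding n_def by (intro divide_left_mono) auto
      moreover have "cmod (\<phi> x) \<le> real n" using n2 unfolding n_def by (simp add: le_max_iff_disj)
      ultimately have "x \<in> A n" using x n1 unfolding A_def by auto
      then show "x \<in> (\<Union>n. A n)" by blast
    qed
    have "{x \<in> space M. r < cmod (\<phi> x)} \<in> sets M" by measurable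
    then have "{x \<in> space M. r < cmod (\<phi> x)} \<in> null_sets M"
      using null_sets_subset[OF N _ S] by blast
    then show False using pos by auto
  qed
  then obtain n where nA: "A n \<notin> null_sets M" by blast
  define K where "K = {z. r + 1 / Suc n \<le> cmod z \<and> cmod z \<le> real n}"
  have Kc: "compact K"
  proof -
    have "closed K" unfolding K_def by (intro closed_Collect_conj closed_Collect_le) (auto intro: continuous_intros)
    moreover have "bounded K" unfolding bounded_iff K_def by (intro exI[of _ "real n"]) auto
    ultimately show ?thesis by (simp add: compact_eq_bounded_closed)
  qed
  show ?thesis
  proof (rule ccontr)
    assume "\<not> ?thesis"
    note nt = this
    have "\<forall>l\<in>K. \<exists>e. e > 0 \<and> emeasure M {x \<in> space M. cmod (\<phi> x - l) < e} = 0"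
    proof
      fix l assume lK: "l \<in> K"
      have "0 < 1 / real (Suc n)" by simp
      moreover have "r + 1 / real (Suc n) \<le> cmod l" using lK unfolding K_def by simp
      ultimately have "r < cmod l" by linarith
      then show "\<exists>e. e > 0 \<and> emeasure M {x \<in> space M. cmod (\<phi> x - l) < e} = 0" using nt by blast
    qed
    from bchoice[OF this] obtain e where e0: "\<forall>l\<in>K. e l > 0 \<and> emeasure M {x \<in> space M. cmod (\<phi> x - l) < e l} = 0"
      by (elim exE)
    then have e: "\<And>l. l \<in> K \<Longrightarrow> e l > 0 \<and> emeasure M {x \<in> space M. cmod (\<phi> x - l) < e l} = 0" by blast
    obtain t where t: "t \<subseteq> K" "finite t" "K \<subseteq> (\<Union>l\<in>t. ball l (e l))"
    proof (rule compactE_image[OF Kc, of K "\<lambda>l. ball l (e l)"])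
      show "\<And>l. l \<in> K \<Longrightarrow> open (ball l (e l))" by simp
      show "K \<subseteq> (\<Union>l\<in>K. ball l (e l))"
      proof
        fix l assume "l \<in> K"
        then have "l \<in> ball l (e l)" using e[of l] by simp
        then show "l \<in> (\<Union>l\<in>K. ball l (e l))" using \<open>l \<in> K\<close> by blast
      qed
    qed (rule that)
    have sub: "A n \<subseteq> (\<Union>l\<in>t. {x \<in> space M. cmod (\<phi> x - l) < e l})"
    proof
      fix x assume x: "x \<in> A n"
      then have "\<phi> x \<in> K" unfolding A_def K_def by auto
      then obtain l where l: "l \<in> t" "\<phi> x \<in> ball l (e l)" using t(3) by auto
      then show "x \<in> (\<Union>l\<in>t. {x \<in> space M. cmod (\<phi> x - l) < e l})"
        using x unfolding A_def by (auto simp: dist_norm norm_minus_commute)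
    qed
    have "(\<Union>l\<in>t. {x \<in> space M. cmod (\<phi> x - l) < e l}) \<in> null_sets M"
    proof (rule null_sets.finite_UN[OF t(2)])
      fix l assume "l \<in> t"
      then have lK: "l \<in> K" using t(1) by auto
      have "{x \<in> space M. cmod (\<phi> x - l) < e l} \<in> sets M" by measurable
      then show "{x \<in> space M. cmod (\<phi> x - l) < e l} \<in> null_sets M" using e[OF lK] by auto
    qed
    then have "A n \<in> null_sets M" using null_sets_subset[OF _ AM sub] by blast
    then show False using nA by simp
  qed
qed

end

context wce_setting
begin

lemma main: "L2_spectral_radius M T = esssup M (\<lambda>x. ereal (cmod (\<phi> x)))"
proof -
  define E where "E = esssup M (\<lambda>x. ereal (cmod (\<phi> x)))"
  have fm[measurable]: "(\<lambda>x. ereal (cmod (\<phi> x))) \<in> borel_measurable M" by measurable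
  have EAE: "AE x in M. ereal (cmod (\<phi> x)) \<le> E" unfolding E_def by (rule esssup_AE)
  show ?thesis
  proof (cases "emeasure M (space M) = 0")
    case True
    have AEF: "AE x in M. False" using True AE_False_iff[of M] by simp
    have AEall: "AE x in M. Q x" for Q using AEF by (rule eventually_mono) simp
    have "L2_spectrum M T = {}"
    proof -
      have "l \<notin> L2_spectrum M T" for l
      proof -
        have "\<forall>g\<in>L2 M. \<exists>f\<in>L2 M. AE x in M. T f x - l * f x = g x"
          using AEall by blast
        moreover have "\<forall>f\<in>L2 M. (AE x in M. T f x - l * f x = 0) \<longrightarrow> (AE x in M. f x = 0)"
          using AEall by blast
        ultimately show ?thesis unfolding L2_spectrum_def by blast
      qed
      then show ?thesis by blast
    qed
    then have L: "L2_spectral_radius M T = bot" unfolding L2_spectral_radius_def by simp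
    have "E = Inf {z. AE x in M. ereal (cmod (\<phi> x)) \<le> z}" unfolding E_def by (rule esssup_eq_AE) simp
    also have "{z. AE x in M. ereal (cmod (\<phi> x)) \<le> z} = UNIV" using AEall by blast
    finally have "E = bot" by simp
    then show ?thesis using L unfolding E_def by simp
  next
    case False
    have E0: "E \<ge> 0"
    proof (rule ccontr)
      assume "\<not> E \<ge> 0"
      then have En: "E < 0" by simp
      have "AE x in M. False" using EAE
      proof eventually_elim
        case (elim x)
        have "ereal (cmod (\<phi> x)) < 0" using elim En by (rule le_less_trans)
        then show False by (simp add: zero_ereal_def)
      qed
      then show False using False AE_False_iff[of M] by simp
    qed
    have upper: "ereal (cmod l) \<le> E" if lS: "l \<in> L2_spectrum M T" for l
    proof (rule ccontr)
      assume "\<not> ereal (cmod l) \<le> E"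
      then have lt: "E < ereal (cmod l)" by simp
      then have "E \<noteq> \<infinity>" by auto
      moreover have "E \<noteq> -\<infinity>" using E0 by auto
      ultimately obtain e where e: "E = ereal e" by (cases E) auto
      have e0: "e \<ge> 0" using E0 e by simp
      have el: "e < cmod l" using lt e by simp
      have l0: "l \<noteq> 0" using e0 el by auto
      have "AE x in M. cmod l - e \<le> cmod (\<phi> x - l)" using EAE
      proof eventually_elim
        case (elim x)
        have "cmod (\<phi> x) \<le> e" using elim e by simp
        moreover have "cmod l \<le> cmod (\<phi> x) + cmod (\<phi> x - l)"
          using norm_triangle_ineq4[of "\<phi> x" "\<phi> x - l"] by simp
        ultimately show ?case by linarith
      qed
      then have "l \<notin> L2_spectrum M T" by (intro resolvent[OF l0]) (use el in auto)
      then show False using lS by simp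
    qed
    have U: "L2_spectral_radius M T \<le> E" unfolding L2_spectral_radius_def by (rule SUP_least) (rule upper)
    have spec_le: "ereal (cmod l) \<le> L2_spectral_radius M T" if "l \<in> L2_spectrum M T" for l
      unfolding L2_spectral_radius_def using that by (rule SUP_upper)
    have Lw: "E \<le> L2_spectral_radius M T"
    proof (cases "E = 0")
      case True
      have "AE x in M. \<phi> x = 0" using EAE by eventually_elim (simp add: True)
      then have "0 \<in> L2_spectrum M T" by (rule zero_spec[OF _ False])
      then have "ereal (cmod 0) \<le> L2_spectral_radius M T" by (rule spec_le)
      then show ?thesis using True by (simp add: zero_ereal_def)
    next
      case Ef: False
      then have Epos: "E > 0" using E0 by simp
      show ?thesis
      proof (rule dense_le)
        fix y assume y: "y < E"
        obtain r where r: "r \<ge> 0" "y \<le> ereal r" "ereal r < E"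
        proof (cases "y \<le> 0")
          case True then show ?thesis using that[of 0] Epos by (simp add: zero_ereal_def)
        next
          case False
          obtain z where z: "y < z" "z < E" using dense[OF y] by blast
          have zf: "z \<noteq> \<infinity>" "z \<noteq> -\<infinity>" using z False by auto
          then obtain r where zr: "z = ereal r" by (cases z) auto
          have "0 < y" using False by simp
          then have "0 < z" using z(1) by (rule less_trans)
          then have r0: "0 \<le> r" using zr by (simp add: zero_ereal_def)
          show ?thesis by (rule that[OF r0]) (use z zr in auto)
        qed
        have "emeasure M {x \<in> space M. ereal r < ereal (cmod (\<phi> x))} > 0"
          using esssup_pos_measure[OF fm, of "ereal r"] r(3) unfolding E_def by simp
        then have pos: "emeasure M {x \<in> space M. r < cmod (\<phi> x)} \<noteq> 0" by simp
        obtain l where l: "r < cmod l" and ess: "\<And>e. e > 0 \<Longrightarrow> emeasure M {x \<in> space M. cmod (\<phi> x - l) < e} \<noteq> 0"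
          using ess_point[OF r(1) pos] by blast
        have l0: "l \<noteq> 0" using l r(1) by auto
        have lS: "l \<in> L2_spectrum M T"
        proof (cases "emeasure M {x \<in> space M. \<phi> x = l} = 0")
          case True then show ?thesis by (rule shell_spec[OF l0 _ ess])
        next
          case False then show ?thesis by (rule eigen_spec[OF l0])
        qed
        have "y \<le> ereal (cmod l)" using r(2) l by (meson ereal_less_eq(3) less_imp_le order_trans)
        also have "\<dots> \<le> L2_spectral_radius M T" by (rule spec_le[OF lS])
        finally show "y \<le> L2_spectral_radius M T" .
      qed
    qed
    show ?thesis using U Lw unfolding E_def by simp
  qed
qed

end

theorem theorem3p3:
  fixes M F :: "'a measure" and u w :: "'a \<Rightarrow> complex"
  assumes "complete_measure M"
    and "sigma_finite_measure M"
    and "sigma_finite_subalgebra M F"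
    and "cond_exp_domain M F u" and "cond_exp_domain M F w"
    and "bounded_on_L2 M (wce_op M F w u)"
  shows "L2_spectral_radius M (wce_op M F w u)
           = esssup M (\<lambda>x. ereal (cmod (cond_exp_c M F (\<lambda>y. u y * w y) x)))"
proof -
  obtain C where maps: "\<And>f. f \<in> L2 M \<Longrightarrow> wce_op M F w u f \<in> L2 M"
    and C: "\<And>f. f \<in> L2 M \<Longrightarrow> L2_norm M (wce_op M F w u f) \<le> C * L2_norm M f"
    using assms(6) unfolding bounded_on_L2_def by blast
  have ax: "wce_setting_axioms M F u w (max C 0)"
  proof (unfold_locales)
    show "cond_exp_domain M F u" by (fact assms(4))
    show "cond_exp_domain M F w" by (fact assms(5))
    show "\<And>f. f \<in> L2 M \<Longrightarrow> wce_op M F w u f \<in> L2 M" by (rule maps)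
    show "0 \<le> max C 0" by simp
    fix f assume f: "f \<in> L2 M"
    have "C * L2_norm M f \<le> max C 0 * L2_norm M f"
      by (rule mult_right_mono) (auto simp: L2_norm_def)
    then show "L2_norm M (wce_op M F w u f) \<le> max C 0 * L2_norm M f" using C[OF f] by linarith
  qed
  interpret ws: wce_setting M F u w "max C 0" by (rule wce_setting.intro[OF assms(3) ax])
  show ?thesis using ws.main unfolding ws.\<phi>_def .
qed

end
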